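(* For any $n\ge2$, $\theta\in(0,1/2)$ and $0<\mu\le\frac1{20\sqrt n}$, for all $\mathbf w\in\mathbb R^{n-1}$ with $\|\mathbf w\|\le\frac{\mu}{4\sqrt2}$, $$\nabla^2_{\mathbf w}\mathbb E\big[h_\mu(\mathbf q(\mathbf w)^*\mathbf x)\big]\succeq\frac{\theta}{5\sqrt{2\pi}\,\mu}\mathbf I,$$ where $\mathbf x\in\mathbb R^n$, $\mathbf x\sim_{i.i.d.}\mathrm{BG}(\theta)$.
   Context: $Z\sim\mathrm{BG}(\theta)$ means $Z=BG$ with $B\sim\mathrm{Ber}(\theta)$, $G\sim\mathcal N(0,1)$ independent; $\mathbf x\sim_{i.i.d.}\mathrm{BG}(\theta)$ means independent $\mathrm{BG}(\theta)$ coordinates. $h_\mu(z)=\mu\log\cosh(z/\mu)$. For $\mathbf w$ in the open unit ball of $\mathbb R^{n-1}$, $\mathbf q(\mathbf w)=(\mathbf w,\sqrt{1-\|\mathbf w\|^2})$. $\nabla^2_{\mathbf w}$ is the Hessian with respect to $\mathbf w$; $\succeq$ is the positive semidefinite order. *)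

theory Defs
  imports "HOL-Probability.Probability"
begin

definition BG :: "real \<Rightarrow> real measure" where
  "BG \<theta> = distr (measure_pmf (bernoulli_pmf \<theta>) \<Otimes>\<^sub>M density lborel std_normal_density) borel
          (\<lambda>(b, g). (if b then 1 else 0) * g)"

definition h_mu :: "real \<Rightarrow> real \<Rightarrow> real" where
  "h_mu \<mu> z = \<mu> * ln (cosh (z / \<mu>))"

text \<open>q(w) = (w, sqrt(1 - |w|^2)) in R^n, where R^{n-1} is indexed by the finite type 'm
  and R^n by 'm option (the extra index None is the last coordinate).\<close>
definition qvec :: "real^'m::finite \<Rightarrow> 'm option \<Rightarrow> real" where
  "qvec w i = (case i of Some j \<Rightarrow> w $ j | None \<Rightarrow> sqrt (1 - (norm w)\<^sup>2))"

definition obj :: "real \<Rightarrow> real \<Rightarrow> real^'m::finite \<Rightarrow> real" where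
  "obj \<theta> \<mu> w = (\<integral>x. h_mu \<mu> (\<Sum>i\<in>UNIV. qvec w i * x i) \<partial>(PiM (UNIV :: 'm option set) (\<lambda>_. BG \<theta>)))"

definition has_hessian_at :: "(real^'m::finite \<Rightarrow> real) \<Rightarrow> (real^'m \<Rightarrow> real^'m) \<Rightarrow> real^'m \<Rightarrow> bool" where
  "has_hessian_at f H w \<longleftrightarrow>
     (\<exists>G. (\<forall>u. norm u < 1 \<longrightarrow> (f has_derivative (\<lambda>v. G u \<bullet> v)) (at u)) \<and> (G has_derivative H) (at w))"

end

theory Submission
  imports Defs
begin

abbreviation NN :: "real measure" where "NN \<equiv> density lborel std_normal_density"

lemma prob_NN: "prob_space NN"
  by (rule prob_space_normal_density) simp

lemma BG_nn_integral:
  fixes f :: "real \<Rightarrow> ennreal"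
  assumes th: "0 \<le> \<theta>" "\<theta> \<le> 1" and f: "f \<in> borel_measurable borel"
  shows "(\<integral>\<^sup>+y. f y \<partial>BG \<theta>) = ennreal (1-\<theta>) * f 0 + ennreal \<theta> * (\<integral>\<^sup>+g. f g \<partial>NN)"
proof -
  interpret N: prob_space NN by (rule prob_NN)
  interpret P: pair_sigma_finite "measure_pmf (bernoulli_pmf \<theta>)" NN
    by unfold_locales
  have m: "(\<lambda>(b::bool, g::real). (if b then 1 else 0) * g) \<in> borel_measurable (measure_pmf (bernoulli_pmf \<theta>) \<Otimes>\<^sub>M NN)"
    by measurable
  have "(\<integral>\<^sup>+y. f y \<partial>BG \<theta>) = (\<integral>\<^sup>+z. f ((\<lambda>(b::bool, g::real). (if b then 1 else 0) * g) z) \<partial>(measure_pmf (bernoulli_pmf \<theta>) \<Otimes>\<^sub>M NN))"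
    unfolding BG_def by (rule nn_integral_distr[OF m]) (simp add: f)
  also have "\<dots> = (\<integral>\<^sup>+b. \<integral>\<^sup>+g. f ((if b then 1 else 0) * g) \<partial>NN \<partial>measure_pmf (bernoulli_pmf \<theta>))"
    by (subst N.nn_integral_fst[symmetric]) (use f m in \<open>auto simp: split_beta'\<close>)
  also have "\<dots> = (\<Sum>b\<in>{True,False}. (\<integral>\<^sup>+g. f ((if b then 1 else 0) * g) \<partial>NN) * ennreal (pmf (bernoulli_pmf \<theta>) b))"
    by (rule nn_integral_measure_pmf_support) auto
  also have "\<dots> = ennreal (1-\<theta>) * f 0 + ennreal \<theta> * (\<integral>\<^sup>+g. f g \<partial>NN)"
    using th by (simp add: pmf_bernoulli_True pmf_bernoulli_False N.emeasure_space_1[simplified] mult.commute add.commute)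
  finally show ?thesis .
qed

lemma BG_integrable:
  fixes f :: "real \<Rightarrow> real"
  assumes th: "0 \<le> \<theta>" "\<theta> \<le> 1" and f: "integrable NN f"
  shows "integrable (BG \<theta>) f"
proof -
  have fb: "f \<in> borel_measurable borel" using f by auto
  have "(\<integral>\<^sup>+y. ennreal (norm (f y)) \<partial>BG \<theta>) = ennreal (1-\<theta>) * norm (f 0) + ennreal \<theta> * (\<integral>\<^sup>+g. norm (f g) \<partial>NN)"
    using th fb by (subst BG_nn_integral) auto
  also have "\<dots> < \<infinity>" using f unfolding integrable_iff_bounded
    by (simp add: ennreal_mult_less_top)
  finally show ?thesis using fb unfolding integrable_iff_bounded
    by (simp add: BG_def)
qed

lemma BG_integral:
  fixes f :: "real \<Rightarrow> real"
  assumes th: "0 \<le> \<theta>" "\<theta> \<le> 1" and f: "integrable NN f"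
  shows "integral\<^sup>L (BG \<theta>) f = (1-\<theta>) * f 0 + \<theta> * integral\<^sup>L NN f"
proof -
  interpret N: prob_space NN by (rule prob_NN)
  interpret P: pair_sigma_finite "measure_pmf (bernoulli_pmf \<theta>)" NN
    by unfold_locales
  have fb: "f \<in> borel_measurable borel" using f by auto
  have m: "(\<lambda>(b::bool, g::real). (if b then 1 else 0) * g) \<in> borel_measurable (measure_pmf (bernoulli_pmf \<theta>) \<Otimes>\<^sub>M NN)"
    by measurable
  have I: "integrable (BG \<theta>) f" by (rule BG_integrable[OF th f])
  have I2: "integrable (measure_pmf (bernoulli_pmf \<theta>) \<Otimes>\<^sub>M NN) (\<lambda>z. f ((\<lambda>(b::bool, g::real). (if b then 1 else 0) * g) z))"
    using I unfolding BG_def by (subst (asm) integrable_distr_eq[OF m]) (auto simp: fb)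
  have "integral\<^sup>L (BG \<theta>) f = integral\<^sup>L (measure_pmf (bernoulli_pmf \<theta>) \<Otimes>\<^sub>M NN) (\<lambda>z. f ((\<lambda>(b::bool, g::real). (if b then 1 else 0) * g) z))"
    unfolding BG_def by (rule integral_distr[OF m]) (simp add: fb)
  also have "\<dots> = (\<integral>b. \<integral>g. f ((if b then 1 else 0) * g) \<partial>NN \<partial>measure_pmf (bernoulli_pmf \<theta>))"
    using P.integral_fst'[OF I2] by (simp add: split_beta')
  also have "\<dots> = (\<Sum>b\<in>{True,False}. (\<integral>g. f ((if b then 1 else 0) * g) \<partial>NN) * pmf (bernoulli_pmf \<theta>) b)"
    by (rule integral_measure_pmf_real) auto
  also have "\<dots> = (1-\<theta>) * f 0 + \<theta> * integral\<^sup>L NN f"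
    using th by (simp add: pmf_bernoulli_True pmf_bernoulli_False N.prob_space[simplified])
  finally show ?thesis .
qed

lemma prob_BG: "0 \<le> \<theta> \<Longrightarrow> \<theta> \<le> 1 \<Longrightarrow> prob_space (BG \<theta>)"
proof -
  assume th: "0 \<le> \<theta>" "\<theta> \<le> 1"
  interpret N: prob_space NN by (rule prob_NN)
  interpret P: pair_prob_space "measure_pmf (bernoulli_pmf \<theta>)" NN
    by unfold_locales
  show ?thesis unfolding BG_def by (rule P.prob_space_distr) measurable
qed

lemma space_BG[simp]: "space (BG \<theta>) = UNIV" by (simp add: BG_def)
lemma sets_BG[simp]: "sets (BG \<theta>) = sets borel" by (simp add: BG_def)

lemma NN_moment: "integrable NN (\<lambda>x. x^k)"
  by (subst integrable_density) (auto simp: integrable_std_normal_moment normal_density_nonneg)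
lemma NN_moment_abs: "integrable NN (\<lambda>x. \<bar>x\<bar>^k)"
  by (subst integrable_density) (auto simp: integrable_std_normal_moment_abs normal_density_nonneg)

lemma NN_int_moment: "integral\<^sup>L NN (\<lambda>x. x^k) = integral\<^sup>L lborel (\<lambda>x. std_normal_density x * x^k)"
  by (subst integral_density) (auto simp: normal_density_nonneg)
lemma NN_int_moment_abs: "integral\<^sup>L NN (\<lambda>x. \<bar>x\<bar>^k) = integral\<^sup>L lborel (\<lambda>x. std_normal_density x * \<bar>x\<bar>^k)"
  by (subst integral_density) (auto simp: normal_density_nonneg)

lemma diff_under_integral:
  fixes \<phi> :: "'a::real_normed_vector \<Rightarrow> 'b \<Rightarrow> 'c::{banach,second_countable_topology}"
    and B :: "'b \<Rightarrow> real"
  assumes r: "0 < r"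
   and deriv: "\<And>u x. u \<in> ball u0 r \<Longrightarrow> x \<in> space M \<Longrightarrow> ((\<lambda>u. \<phi> u x) has_derivative D u x) (at u)"
   and bound: "\<And>u x. u \<in> ball u0 r \<Longrightarrow> x \<in> space M \<Longrightarrow> onorm (D u x) \<le> B x"
   and B: "integrable M B"
   and meas: "\<And>u. u \<in> ball u0 r \<Longrightarrow> (\<lambda>x. \<phi> u x) \<in> borel_measurable M"
   and measD: "\<And>v. (\<lambda>x. D u0 x v) \<in> borel_measurable M"
   and int0: "integrable M (\<phi> u0)"
  shows "((\<lambda>u. \<integral>x. \<phi> u x \<partial>M) has_derivative (\<lambda>v. \<integral>x. D u0 x v \<partial>M)) (at u0)"
    and "\<And>v. integrable M (\<lambda>x. D u0 x v)"
    and "\<And>u. u \<in> ball u0 r \<Longrightarrow> integrable M (\<phi> u)"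
proof -
  have u0: "u0 \<in> ball u0 r" using r by simp
  have bl: "\<And>u x. u \<in> ball u0 r \<Longrightarrow> x \<in> space M \<Longrightarrow> bounded_linear (D u x)"
    using deriv has_derivative_bounded_linear by blast
  have Dbound: "norm (D u0 x v) \<le> B x * norm v" if "x \<in> space M" for x v
  proof -
    have "norm (D u0 x v) \<le> onorm (D u0 x) * norm v" using onorm bl[OF u0 that] by blast
    also have "\<dots> \<le> B x * norm v" using bound[OF u0 that] by (intro mult_right_mono) auto
    finally show ?thesis .
  qed
  have Bnn: "\<And>x. x \<in> space M \<Longrightarrow> 0 \<le> B x"
    using bound[OF u0] onorm_pos_le bl[OF u0] by (meson order_trans)
  show intD: "integrable M (\<lambda>x. D u0 x v)" for v
    by (rule Bochner_Integration.integrable_bound[where f="\<lambda>x. B x * norm v"])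
       (use B measD Dbound Bnn in \<open>auto intro!: AE_I2 simp: abs_mult\<close>)
  have mvt: "norm (\<phi> u x - \<phi> u0 x) \<le> B x * norm (u - u0)" if u: "u \<in> ball u0 r" and x: "x \<in> space M" for u x
    by (rule differentiable_bound[where S="ball u0 r" and f'="\<lambda>u. D u x"])
       (use u x u0 deriv bound in \<open>auto intro: has_derivative_at_withinI\<close>)
  show intu: "integrable M (\<phi> u)" if u: "u \<in> ball u0 r" for u
  proof (rule Bochner_Integration.integrable_bound[where f="\<lambda>x. norm (\<phi> u0 x) + B x * norm (u - u0)"])
    show "integrable M (\<lambda>x. norm (\<phi> u0 x) + B x * norm (u - u0))"
      using int0 B by auto
    show "\<phi> u \<in> borel_measurable M" using meas[OF u] by simp
    show "AE x in M. norm (\<phi> u x) \<le> norm (norm (\<phi> u0 x) + B x * norm (u - u0))"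
    proof (rule AE_I2)
      fix x assume x: "x \<in> space M"
      have "norm (\<phi> u x) \<le> norm (\<phi> u0 x) + norm (\<phi> u x - \<phi> u0 x)" by (rule norm_triangle_sub)
      also have "\<dots> \<le> norm (\<phi> u0 x) + B x * norm (u - u0)" using mvt[OF u x] by simp
      also have "\<dots> \<le> norm (norm (\<phi> u0 x) + B x * norm (u - u0))" by simp
      finally show "norm (\<phi> u x) \<le> norm (norm (\<phi> u0 x) + B x * norm (u - u0))" .
    qed
  qed
  define L where "L = (\<lambda>v. \<integral>x. D u0 x v \<partial>M)"
  have blL: "bounded_linear L"
  proof (rule bounded_linear_intro[where K="\<integral>x. B x \<partial>M"])
    fix v w
    show "L (v + w) = L v + L w"
    proof -
      have "(\<integral>x. D u0 x (v + w) \<partial>M) = (\<integral>x. D u0 x v + D u0 x w \<partial>M)"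
        by (rule Bochner_Integration.integral_cong) (auto simp: linear_simps(1)[OF bl[OF u0]])
      also have "\<dots> = (\<integral>x. D u0 x v \<partial>M) + (\<integral>x. D u0 x w \<partial>M)"
        by (rule Bochner_Integration.integral_add[OF intD intD])
      finally show ?thesis unfolding L_def .
    qed
    fix c::real
    show "L (c *\<^sub>R v) = c *\<^sub>R L v"
    proof -
      have "(\<integral>x. D u0 x (c *\<^sub>R v) \<partial>M) = (\<integral>x. c *\<^sub>R D u0 x v \<partial>M)"
        by (rule Bochner_Integration.integral_cong) (auto simp: linear_simps(5)[OF bl[OF u0]])
      then show ?thesis unfolding L_def by simp
    qed
  next
    fix v
    have "norm (L v) \<le> (\<integral>x. norm (D u0 x v) \<partial>M)" unfolding L_def
      by (rule integral_norm_bound)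
    also have "\<dots> \<le> \<integral>x. B x * norm v \<partial>M"
      by (rule Bochner_Integration.integral_mono[OF integrable_norm[OF intD]]) (use B Dbound in simp_all)
    also have "\<dots> = norm v * (\<integral>x. B x \<partial>M)" by simp
    finally show "norm (L v) \<le> norm v * (\<integral>x. B x \<partial>M)" .
  qed
  define F where "F = (\<lambda>u. \<integral>x. \<phi> u x \<partial>M)"
  have "(\<lambda>h. norm (F (u0 + h) - F u0 - L h) / norm h) \<midarrow>0\<rightarrow> 0"
    unfolding tendsto_at_iff_sequentially comp_def
  proof (intro allI impI)
    fix X :: "nat \<Rightarrow> 'a" assume X0: "\<forall>i. X i \<in> UNIV - {0}" and X: "X \<longlonglongrightarrow> 0"
    have "(\<lambda>i. norm (X i)) \<longlonglongrightarrow> 0" using X by (rule tendsto_norm_zero)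
    from order_tendstoD(2)[OF this r] have "\<forall>\<^sub>F i in sequentially. norm (X i) < r" .
    then obtain N where N: "\<And>i. i \<ge> N \<Longrightarrow> norm (X i) < r" unfolding eventually_sequentially by blast
    define Y where "Y = (\<lambda>i. X (i + N))"
    have Yr: "norm (Y i) < r" for i using N unfolding Y_def by simp
    have Yb: "u0 + Y i \<in> ball u0 r" for i using Yr[of i] by (simp add: dist_norm)
    have Y0: "Y i \<noteq> 0" for i using X0 unfolding Y_def by auto
    have Y: "Y \<longlonglongrightarrow> 0" unfolding Y_def using X by (rule LIMSEQ_ignore_initial_segment)
    define s where "s = (\<lambda>i x. norm (\<phi> (u0 + Y i) x - \<phi> u0 x - D u0 x (Y i)) / norm (Y i))"
    have sconv: "(\<lambda>i. integral\<^sup>L M (s i)) \<longlonglongrightarrow> integral\<^sup>L M (\<lambda>x. 0::real)"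
    proof (rule integral_dominated_convergence[where w="\<lambda>x. 2 * B x"])
      show "(\<lambda>x. 0::real) \<in> borel_measurable M" by simp
      show "s i \<in> borel_measurable M" for i unfolding s_def
        using meas[OF Yb] meas[OF u0] measD by measurable
      show "integrable M (\<lambda>x. 2 * B x)" using B by simp
      show "AE x in M. (\<lambda>i. s i x) \<longlonglongrightarrow> 0"
      proof (rule AE_I2)
        fix x assume x: "x \<in> space M"
        have "(\<lambda>h. norm (\<phi> (u0 + h) x - \<phi> u0 x - D u0 x h) / norm h) \<midarrow>0\<rightarrow> 0"
          using deriv[OF u0 x] unfolding has_derivative_at by blast
        then show "(\<lambda>i. s i x) \<longlonglongrightarrow> 0" unfolding s_def tendsto_at_iff_sequentially comp_def
          using Y Y0 by blast
      qed
      show "AE x in M. norm (s i x) \<le> 2 * B x" for i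
      proof (rule AE_I2)
        fix x assume x: "x \<in> space M"
        have "norm (\<phi> (u0 + Y i) x - \<phi> u0 x - D u0 x (Y i)) \<le> norm (\<phi> (u0 + Y i) x - \<phi> u0 x) + norm (D u0 x (Y i))"
          by (rule norm_triangle_ineq4)
        also have "\<dots> \<le> B x * norm (Y i) + B x * norm (Y i)"
          using mvt[OF Yb x] Dbound[OF x] by (intro add_mono) auto
        finally have "norm (\<phi> (u0 + Y i) x - \<phi> u0 x - D u0 x (Y i)) \<le> (2 * B x) * norm (Y i)" by simp
        then show "norm (s i x) \<le> 2 * B x" unfolding s_def using Y0[of i]
          by (simp add: divide_le_eq)
      qed
    qed
    have le: "norm (F (u0 + Y i) - F u0 - L (Y i)) / norm (Y i) \<le> integral\<^sup>L M (s i)" for i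
    proof -
      have "F (u0 + Y i) - F u0 - L (Y i) = (\<integral>x. \<phi> (u0 + Y i) x - \<phi> u0 x - D u0 x (Y i) \<partial>M)"
        unfolding F_def L_def
        by (simp add: Bochner_Integration.integral_diff[OF Bochner_Integration.integrable_diff[OF intu[OF Yb] int0] intD] Bochner_Integration.integral_diff[OF intu[OF Yb] int0])
      then have "norm (F (u0 + Y i) - F u0 - L (Y i)) \<le> (\<integral>x. norm (\<phi> (u0 + Y i) x - \<phi> u0 x - D u0 x (Y i)) \<partial>M)"
        by (simp add: integral_norm_bound)
      then show ?thesis unfolding s_def using Y0[of i] by (simp add: divide_right_mono)
    qed
    have "(\<lambda>i. norm (F (u0 + Y i) - F u0 - L (Y i)) / norm (Y i)) \<longlonglongrightarrow> 0"
      by (rule tendsto_sandwich[where f="\<lambda>_. 0" and h="\<lambda>i. integral\<^sup>L M (s i)"])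
         (use le sconv in auto)
    then show "(\<lambda>i. norm (F (u0 + X i) - F u0 - L (X i)) / norm (X i)) \<longlonglongrightarrow> 0"
      unfolding Y_def by (rule LIMSEQ_offset)
  qed
  then show "((\<lambda>u. \<integral>x. \<phi> u x \<partial>M) has_derivative (\<lambda>v. \<integral>x. D u0 x v \<partial>M)) (at u0)"
    unfolding has_derivative_at F_def[symmetric] L_def[symmetric] using blL by simp
qed

abbreviation PP :: "real \<Rightarrow> ('m::finite option \<Rightarrow> real) measure" where
  "PP \<theta> \<equiv> PiM (UNIV :: 'm option set) (\<lambda>_. BG \<theta>)"

lemma prod_option: "(\<Prod>i\<in>(UNIV::'m::finite option set). F i) = F None * (\<Prod>t\<in>UNIV. F (Some t))"
  by (simp add: UNIV_option_conv prod.reindex)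
lemma sum_option: "(\<Sum>i\<in>(UNIV::'m::finite option set). F i) = F None + (\<Sum>t\<in>UNIV. F (Some t))"
  by (simp add: UNIV_option_conv sum.reindex)

lemma prob_PP: "0 \<le> \<theta> \<Longrightarrow> \<theta> \<le> 1 \<Longrightarrow> prob_space (PP \<theta> :: ('m::finite option \<Rightarrow> real) measure)"
proof -
  assume th: "0 \<le> \<theta>" "\<theta> \<le> 1"
  interpret product_prob_space "\<lambda>_. BG \<theta>" "UNIV :: 'm option set"
    by (rule product_prob_spaceI) (rule prob_BG[OF th])
  show ?thesis by (rule prob_space_PiM) (simp add: prob_BG[OF th])
qed

lemma PP_prod:
  fixes f :: "'m::finite option \<Rightarrow> real \<Rightarrow> real"
  assumes th: "0 \<le> \<theta>" "\<theta> \<le> 1" and f: "\<And>i. integrable (BG \<theta>) (f i)"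
  shows "integrable (PP \<theta>) (\<lambda>x. \<Prod>i\<in>UNIV. f i (x i))"
    and "(\<integral>x. (\<Prod>i\<in>UNIV. f i (x i)) \<partial>PP \<theta>) = (\<Prod>i\<in>UNIV. integral\<^sup>L (BG \<theta>) (f i))"
proof -
  interpret product_prob_space "\<lambda>_. BG \<theta>" "UNIV :: 'm option set"
    by (rule product_prob_spaceI) (rule prob_BG[OF th])
  show "integrable (PP \<theta>) (\<lambda>x. \<Prod>i\<in>UNIV. f i (x i))"
    by (rule product_integrable_prod) (auto simp: f)
  show "(\<integral>x. (\<Prod>i\<in>UNIV. f i (x i)) \<partial>PP \<theta>) = (\<Prod>i\<in>UNIV. integral\<^sup>L (BG \<theta>) (f i))"
    by (rule product_integral_prod) (auto simp: f)
qed

definition mom :: "real \<Rightarrow> nat \<Rightarrow> real" where "mom \<theta> k = integral\<^sup>L (BG \<theta>) (\<lambda>y. y^k)"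

lemma BG_int_pow: "0 \<le> \<theta> \<Longrightarrow> \<theta> \<le> 1 \<Longrightarrow> integrable (BG \<theta>) (\<lambda>y. y^k)"
  by (rule BG_integrable) (auto simp: NN_moment)
lemma BG_int_abspow: "0 \<le> \<theta> \<Longrightarrow> \<theta> \<le> 1 \<Longrightarrow> integrable (BG \<theta>) (\<lambda>y. \<bar>y\<bar>^k)"
  by (rule BG_integrable) (auto simp: NN_moment_abs)

lemma mom_0: "0 \<le> \<theta> \<Longrightarrow> \<theta> \<le> 1 \<Longrightarrow> mom \<theta> 0 = 1"
  unfolding mom_def using prob_space.prob_space[OF prob_BG] by simp

lemma mom_odd: assumes "0 \<le> \<theta>" "\<theta> \<le> 1" shows "mom \<theta> (2*k+1) = 0"
proof -
  have "mom \<theta> (2*k+1) = (1-\<theta>) * 0^(2*k+1) + \<theta> * (LBINT x. std_normal_density x * x ^ (2*k+1))"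
    unfolding mom_def BG_integral[OF assms NN_moment] NN_int_moment ..
  then show ?thesis by (simp only: integral_std_normal_moment_odd) simp
qed

lemma mom_even: assumes "0 \<le> \<theta>" "\<theta> \<le> 1" shows "mom \<theta> (2*k) = (if k = 0 then 1 else \<theta> * (fact (2 * k) / (2^k * fact k)))"
  unfolding mom_def using assms
  by (subst BG_integral) (auto simp: NN_moment NN_int_moment integral_std_normal_moment_even)

lemma mom_1: "0 \<le> \<theta> \<Longrightarrow> \<theta> \<le> 1 \<Longrightarrow> mom \<theta> 1 = 0" using mom_odd[of \<theta> 0] by simp
lemma mom_3: "0 \<le> \<theta> \<Longrightarrow> \<theta> \<le> 1 \<Longrightarrow> mom \<theta> 3 = 0" using mom_odd[of \<theta> 1] by (simp add: numeral_3_eq_3)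
lemma mom_2: "0 \<le> \<theta> \<Longrightarrow> \<theta> \<le> 1 \<Longrightarrow> mom \<theta> 2 = \<theta>" using mom_even[of \<theta> 1] by simp
lemma mom_4: "0 \<le> \<theta> \<Longrightarrow> \<theta> \<le> 1 \<Longrightarrow> mom \<theta> 4 = 3 * \<theta>"
  using mom_even[of \<theta> 2] by (simp add: fact_numeral)

lemma BG_abs: assumes "0 \<le> \<theta>" "\<theta> \<le> 1" shows "integral\<^sup>L (BG \<theta>) (\<lambda>y. \<bar>y\<bar>) \<le> \<theta>"
proof -
  have "integral\<^sup>L (BG \<theta>) (\<lambda>y. \<bar>y\<bar>^(2*0+1)) = (1-\<theta>) * \<bar>0\<bar>^(2*0+1) + \<theta> * (LBINT x. std_normal_density x * \<bar>x\<bar> ^ (2*0+1))"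
    unfolding BG_integral[OF assms NN_moment_abs] NN_int_moment_abs ..
  then have "integral\<^sup>L (BG \<theta>) (\<lambda>y. \<bar>y\<bar>) = \<theta> * sqrt (2/pi)"
    by (simp only: integral_std_normal_moment_abs_odd) simp
  moreover have "sqrt (2/pi) \<le> 1" using pi_gt3 by simp
  ultimately show ?thesis using assms by (simp add: mult_left_le)
qed

lemma NN_null0: "integral\<^sup>L NN (indicator {0::real} :: real \<Rightarrow> real) = 0"
proof -
  have "emeasure NN {0} = 0"
    by (subst emeasure_density) (auto intro!: nn_integral_null_set)
  then show ?thesis by (simp add: measure_def)
qed

lemma BG_ind0: assumes "0 \<le> \<theta>" "\<theta> \<le> 1"
  shows "integrable (BG \<theta>) (indicator {0::real} :: real \<Rightarrow> real)" "integral\<^sup>L (BG \<theta>) (indicator {0::real} :: real \<Rightarrow> real) = 1 - \<theta>"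
proof -
  interpret N: prob_space NN by (rule prob_NN)
  have i: "integrable NN (indicator {0::real} :: real \<Rightarrow> real)" by (rule integrable_real_indicator) (simp_all add: N.emeasure_finite less_top[symmetric])
  show "integrable (BG \<theta>) (indicator {0::real} :: real \<Rightarrow> real)" by (rule BG_integrable[OF assms i])
  show "integral\<^sup>L (BG \<theta>) (indicator {0::real} :: real \<Rightarrow> real) = 1 - \<theta>"
    using assms by (subst BG_integral[OF assms i]) (simp add: NN_null0[simplified])
qed

definition cnt :: "'a list \<Rightarrow> 'a \<Rightarrow> nat" where "cnt l t = length (filter ((=) t) l)"

lemma cnt_simps[simp]: "cnt [] t = 0" "cnt (a # l) t = (if t = a then 1 else 0) + cnt l t"
  by (auto simp: cnt_def)

lemma prod_delta_pow: "(\<Prod>t\<in>(UNIV::'m::finite set). (y t::real) ^ (if t = a then 1 else 0)) = y a"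
proof -
  have "(\<Prod>t\<in>(UNIV::'m set). y t ^ (if t = a then 1 else 0)) = (\<Prod>t\<in>UNIV. if t = a then y t else 1)"
    by (rule prod.cong) auto
  also have "\<dots> = y a" by (simp add: prod.delta)
  finally show ?thesis .
qed

lemma prod_list_cnt: "(\<Prod>j\<leftarrow>l. (y j::real)) = (\<Prod>t\<in>(UNIV::'m::finite set). y t ^ cnt l t)"
proof (induction l)
  case Nil then show ?case by simp
next
  case (Cons a l)
  have "(\<Prod>t\<in>(UNIV::'m set). y t ^ cnt (a # l) t) = (\<Prod>t\<in>UNIV. y t ^ (if t = a then 1 else 0) * y t ^ cnt l t)"
    by (simp add: power_add)
  also have "\<dots> = y a * (\<Prod>t\<in>UNIV. y t ^ cnt l t)"
    by (simp add: prod.distrib prod_delta_pow)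
  finally show ?case using Cons by simp
qed

lemma PP_ind_mono:
  fixes e :: "'m::finite \<Rightarrow> nat"
  assumes th: "0 \<le> \<theta>" "\<theta> \<le> 1"
  shows "integrable (PP \<theta>) (\<lambda>x::'m option \<Rightarrow> real. indicator {0} (x None) * (\<Prod>t\<in>UNIV. x (Some t) ^ e t))"
    and "(\<integral>x. indicator {0} (x None) * (\<Prod>t\<in>UNIV. x (Some t) ^ e t) \<partial>PP \<theta>) = (1-\<theta>) * (\<Prod>t\<in>UNIV. mom \<theta> (e t))"
proof -
  define f :: "'m option \<Rightarrow> real \<Rightarrow> real" where
    "f = (\<lambda>i. case i of None \<Rightarrow> indicator {0} | Some t \<Rightarrow> (\<lambda>y. y ^ e t))"
  have f: "integrable (BG \<theta>) (f i)" for i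
    by (cases i) (auto simp: f_def BG_int_pow[OF th] BG_ind0[OF th])
  have eq: "(\<lambda>x::'m option \<Rightarrow> real. indicator {0} (x None) * (\<Prod>t\<in>UNIV. x (Some t) ^ e t)) = (\<lambda>x. \<Prod>i\<in>UNIV. f i (x i))"
    by (simp add: prod_option f_def)
  show "integrable (PP \<theta>) (\<lambda>x::'m option \<Rightarrow> real. indicator {0} (x None) * (\<Prod>t\<in>UNIV. x (Some t) ^ e t))"
    unfolding eq by (rule PP_prod(1)[OF th f])
  show "(\<integral>x. indicator {0} (x None) * (\<Prod>t\<in>UNIV. x (Some t) ^ e t) \<partial>PP \<theta>) = (1-\<theta>) * (\<Prod>t\<in>UNIV. mom \<theta> (e t))"
    unfolding eq PP_prod(2)[OF th f] using BG_ind0(2)[OF th, simplified] by (simp add: prod_option f_def mom_def)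
qed

lemma PP_abs_mono:
  fixes e :: "'m::finite option \<Rightarrow> nat"
  assumes th: "0 \<le> \<theta>" "\<theta> \<le> 1"
  shows "integrable (PP \<theta>) (\<lambda>x::'m option \<Rightarrow> real. \<Prod>i\<in>UNIV. \<bar>x i\<bar> ^ e i)"
  by (rule PP_prod(1)[OF th]) (rule BG_int_abspow[OF th])

lemma PP_abs_list:
  assumes th: "0 \<le> \<theta>" "\<theta> \<le> 1"
  shows "integrable (PP \<theta>) (\<lambda>x::'m::finite option \<Rightarrow> real. \<Prod>j\<leftarrow>l. \<bar>x j\<bar>)"
  unfolding prod_list_cnt[where y="\<lambda>j. \<bar>_ j\<bar>"] by (rule PP_abs_mono[OF th])

lemma mom_prod_set:
  assumes th: "0 \<le> \<theta>" "\<theta> \<le> 1"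
  shows "(\<Prod>t\<in>(UNIV::'m::finite set). mom \<theta> (cnt l t)) = (\<Prod>t\<in>set l. mom \<theta> (cnt l t))"
proof (rule prod.mono_neutral_right)
  have "i \<notin> set l \<Longrightarrow> cnt l i = 0" for i by (induction l) auto
  then show "\<forall>i\<in>UNIV - set l. mom \<theta> (cnt l i) = 1"
    using mom_0[OF th] by auto
qed auto

lemma PP_ind_list:
  assumes th: "0 \<le> \<theta>" "\<theta> \<le> 1"
  shows "integrable (PP \<theta>) (\<lambda>x::'m::finite option \<Rightarrow> real. indicator {0} (x None) * (\<Prod>j\<leftarrow>l. x (Some j)))"
    and "(\<integral>x. indicator {0} (x None) * (\<Prod>j\<leftarrow>l. x (Some j)) \<partial>PP \<theta>) = (1-\<theta>) * (\<Prod>t\<in>set l. mom \<theta> (cnt l t))"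
  unfolding prod_list_cnt[where y="\<lambda>j. _ (Some j)"]
  using PP_ind_mono[OF th, of "cnt l"] mom_prod_set[OF th, of l] by auto

lemma mom_Suc:
  assumes th: "0 \<le> \<theta>" "\<theta> \<le> 1"
  shows "mom \<theta> (Suc 0) = 0" "mom \<theta> (Suc (Suc 0)) = \<theta>" "mom \<theta> (Suc (Suc (Suc 0))) = 0"
    "mom \<theta> (Suc (Suc (Suc (Suc 0)))) = 3*\<theta>"
  using mom_1[OF th] mom_2[OF th] mom_3[OF th] mom_4[OF th]
  by (simp_all add: numeral_2_eq_2 numeral_3_eq_3 numeral_eq_Suc)

lemma E2:
  assumes th: "0 \<le> \<theta>" "\<theta> \<le> 1"
  shows "(\<integral>x. indicator {0} (x None) * (x (Some a) * x (Some b)) \<partial>PP \<theta>) = (1-\<theta>) * (if a = b then \<theta> else 0)"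
  using PP_ind_list(2)[OF th, of "[a,b]"] mom_Suc[OF th]
  by (cases "a = b") (auto simp: prod.insert_if)

lemma E4:
  assumes th: "0 \<le> \<theta>" "\<theta> \<le> 1"
  shows "(\<integral>x. indicator {0} (x None) * (x (Some a) * (x (Some b) * (x (Some c) * x (Some d)))) \<partial>PP \<theta>)
     = (1-\<theta>) * (\<theta>^2 * ((if a = b \<and> c = d then 1 else 0) + (if a = c \<and> b = d then 1 else 0) + (if a = d \<and> b = c then 1 else 0))
         + (3*\<theta> - 3*\<theta>^2) * (if a = b \<and> b = c \<and> c = d then 1 else 0))"
  using PP_ind_list(2)[OF th, of "[a,b,c,d]"] mom_Suc[OF th]
  by (cases "a = b"; cases "a = c"; cases "a = d"; cases "b = c"; cases "b = d"; cases "c = d")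
     (auto simp: prod.insert_if power2_eq_square)

lemma dmult: "(\<Sum>b\<in>(UNIV::'m::finite set). G b * (if a = b then 1 else 0::real)) = G a"
  "(\<Sum>b\<in>(UNIV::'m::finite set). G b * (if b = a then 1 else 0::real)) = G a"
proof -
  have "(\<Sum>b\<in>(UNIV::'m::finite set). G b * (if a = b then 1 else 0::real)) = (\<Sum>b\<in>UNIV. if a = b then G b else 0)"
    by (rule sum.cong) auto
  then show "(\<Sum>b\<in>(UNIV::'m::finite set). G b * (if a = b then 1 else 0::real)) = G a" by simp
  have "(\<Sum>b\<in>(UNIV::'m::finite set). G b * (if b = a then 1 else 0::real)) = (\<Sum>b\<in>UNIV. if a = b then G b else 0)"
    by (rule sum.cong) auto
  then show "(\<Sum>b\<in>(UNIV::'m::finite set). G b * (if b = a then 1 else 0::real)) = G a" by simp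
qed

lemma ifc: "(if P \<and> Q then 1 else 0::real) = (if P then 1 else 0) * (if Q then 1 else 0)" by simp


lemma H1: fixes F :: "'m::finite \<Rightarrow> 'm \<Rightarrow> 'm \<Rightarrow> 'm \<Rightarrow> real"
  shows "(\<Sum>a\<in>UNIV. \<Sum>b\<in>UNIV. \<Sum>c\<in>UNIV. \<Sum>d\<in>UNIV. F a b c d * (if a = b \<and> c = d then 1 else 0))
   = (\<Sum>a\<in>UNIV. \<Sum>c\<in>UNIV. F a a c c)"
proof -
  have "(\<Sum>a\<in>UNIV. \<Sum>b\<in>UNIV. \<Sum>c\<in>UNIV. \<Sum>d\<in>UNIV. F a b c d * (if a = b \<and> c = d then 1 else 0))
     = (\<Sum>a\<in>UNIV. \<Sum>b\<in>UNIV. (\<Sum>c\<in>UNIV. \<Sum>d\<in>UNIV. F a b c d * (if c = d then 1 else 0)) * (if a = b then 1 else 0))"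
    by (simp add: ifc sum_distrib_right sum_distrib_left mult_ac)
  also have "\<dots> = (\<Sum>a\<in>UNIV. \<Sum>c\<in>UNIV. F a a c c)" by (simp add: dmult)
  finally show ?thesis .
qed

lemma H2: fixes F :: "'m::finite \<Rightarrow> 'm \<Rightarrow> 'm \<Rightarrow> 'm \<Rightarrow> real"
  shows "(\<Sum>a\<in>UNIV. \<Sum>b\<in>UNIV. \<Sum>c\<in>UNIV. \<Sum>d\<in>UNIV. F a b c d * (if a = c \<and> b = d then 1 else 0))
   = (\<Sum>a\<in>UNIV. \<Sum>b\<in>UNIV. F a b a b)"
proof -
  have "(\<Sum>a\<in>UNIV. \<Sum>b\<in>UNIV. \<Sum>c\<in>UNIV. \<Sum>d\<in>UNIV. F a b c d * (if a = c \<and> b = d then 1 else 0))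
     = (\<Sum>a\<in>UNIV. \<Sum>b\<in>UNIV. (\<Sum>c\<in>UNIV. (\<Sum>d\<in>UNIV. F a b c d * (if b = d then 1 else 0)) * (if a = c then 1 else 0)))"
    by (simp add: ifc sum_distrib_right sum_distrib_left mult_ac)
  also have "\<dots> = (\<Sum>a\<in>UNIV. \<Sum>b\<in>UNIV. F a b a b)" by (simp add: dmult)
  finally show ?thesis .
qed

lemma H3: fixes F :: "'m::finite \<Rightarrow> 'm \<Rightarrow> 'm \<Rightarrow> 'm \<Rightarrow> real"
  shows "(\<Sum>a\<in>UNIV. \<Sum>b\<in>UNIV. \<Sum>c\<in>UNIV. \<Sum>d\<in>UNIV. F a b c d * (if a = d \<and> b = c then 1 else 0))
   = (\<Sum>a\<in>UNIV. \<Sum>b\<in>UNIV. F a b b a)"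
proof -
  have "(\<Sum>a\<in>UNIV. \<Sum>b\<in>UNIV. \<Sum>c\<in>UNIV. \<Sum>d\<in>UNIV. F a b c d * (if a = d \<and> b = c then 1 else 0))
     = (\<Sum>a\<in>UNIV. \<Sum>b\<in>UNIV. (\<Sum>c\<in>UNIV. (\<Sum>d\<in>UNIV. F a b c d * (if a = d then 1 else 0)) * (if b = c then 1 else 0)))"
    by (simp add: ifc sum_distrib_right sum_distrib_left mult_ac)
  also have "\<dots> = (\<Sum>a\<in>UNIV. \<Sum>b\<in>UNIV. F a b b a)" by (simp add: dmult)
  finally show ?thesis .
qed

lemma H4: fixes F :: "'m::finite \<Rightarrow> 'm \<Rightarrow> 'm \<Rightarrow> 'm \<Rightarrow> real"
  shows "(\<Sum>a\<in>UNIV. \<Sum>b\<in>UNIV. \<Sum>c\<in>UNIV. \<Sum>d\<in>UNIV. F a b c d * (if a = b \<and> b = c \<and> c = d then 1 else 0))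
   = (\<Sum>a\<in>UNIV. F a a a a)"
proof -
  have "(\<Sum>a\<in>UNIV. \<Sum>b\<in>UNIV. \<Sum>c\<in>UNIV. \<Sum>d\<in>UNIV. F a b c d * (if a = b \<and> b = c \<and> c = d then 1 else 0))
     = (\<Sum>a\<in>UNIV. \<Sum>b\<in>UNIV. (\<Sum>c\<in>UNIV. (\<Sum>d\<in>UNIV. F a b c d * (if c = d then 1 else 0)) * (if b = c then 1 else 0)) * (if a = b then 1 else 0))"
    by (simp add: ifc sum_distrib_right sum_distrib_left mult_ac)
  also have "\<dots> = (\<Sum>a\<in>UNIV. F a a a a)" by (simp add: dmult)
  finally show ?thesis .
qed

definition xb :: "('m::finite option \<Rightarrow> real) \<Rightarrow> real^'m" where "xb x = (\<chi> j. x (Some j))"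

lemma inner_xb: "w \<bullet> xb x = (\<Sum>j\<in>UNIV. w $ j * x (Some j))"
  by (simp add: xb_def inner_vec_def)

lemma prod4: "(\<Sum>a\<in>A. f a) * ((\<Sum>b\<in>B. g b) * ((\<Sum>c\<in>C. h c) * (\<Sum>d\<in>D. k d))) =
   (\<Sum>a\<in>A. \<Sum>b\<in>B. \<Sum>c\<in>C. \<Sum>d\<in>D. f a * (g b * (h c * (k d::real))))"
proof -
  have 1: "(\<Sum>c\<in>C. h c) * (\<Sum>d\<in>D. k d) = (\<Sum>c\<in>C. \<Sum>d\<in>D. h c * k d)" by (rule sum_product)
  have 2: "(\<Sum>b\<in>B. g b) * (\<Sum>c\<in>C. \<Sum>d\<in>D. h c * k d) = (\<Sum>b\<in>B. \<Sum>c\<in>C. \<Sum>d\<in>D. g b * (h c * k d))"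
    by (subst sum_product) (simp add: sum_distrib_left)
  have 3: "(\<Sum>a\<in>A. f a) * (\<Sum>b\<in>B. \<Sum>c\<in>C. \<Sum>d\<in>D. g b * (h c * k d)) = (\<Sum>a\<in>A. \<Sum>b\<in>B. \<Sum>c\<in>C. \<Sum>d\<in>D. f a * (g b * (h c * k d)))"
    by (subst sum_product) (simp add: sum_distrib_left)
  show ?thesis unfolding 1 2 3 ..
qed

lemma E_quart:
  fixes w v :: "real^'m::finite"
  assumes th: "0 \<le> \<theta>" "\<theta> \<le> 1"
  shows "integrable (PP \<theta>) (\<lambda>x::'m option \<Rightarrow> real. indicator {0} (x None) * ((w \<bullet> xb x)^2 * (v \<bullet> xb x)^2))"
    and "(\<integral>x. indicator {0} (x None) * ((w \<bullet> xb x)^2 * (v \<bullet> xb x)^2) \<partial>PP \<theta>)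
      = (1-\<theta>) * (\<theta>^2 * ((w \<bullet> w) * (v \<bullet> v) + 2 * (w \<bullet> v)^2) + (3*\<theta> - 3*\<theta>^2) * (\<Sum>a\<in>UNIV. (w$a)^2 * (v$a)^2))"
proof -
  define M where "M = (\<lambda>a b c d (x::'m option \<Rightarrow> real). indicator {0} (x None) * (x (Some a) * (x (Some b) * (x (Some c) * x (Some d)))))"
  have Mi: "integrable (PP \<theta>) (M a b c d)" for a b c d
    using PP_ind_list(1)[OF th, of "[a,b,c,d]"] by (simp add: M_def)
  have eq: "(\<lambda>x::'m option \<Rightarrow> real. indicator {0} (x None) * ((w \<bullet> xb x)^2 * (v \<bullet> xb x)^2))
    = (\<lambda>x. \<Sum>a\<in>UNIV. \<Sum>b\<in>UNIV. \<Sum>c\<in>UNIV. \<Sum>d\<in>UNIV. (w$a * w$b * v$c * v$d) * M a b c d x)"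
  proof (rule ext)
    fix x :: "'m option \<Rightarrow> real"
    have "(w \<bullet> xb x)^2 * (v \<bullet> xb x)^2 = (w \<bullet> xb x) * ((w \<bullet> xb x) * ((v \<bullet> xb x) * (v \<bullet> xb x)))"
      by (simp add: power2_eq_square)
    also have "\<dots> = (\<Sum>a\<in>UNIV. \<Sum>b\<in>UNIV. \<Sum>c\<in>UNIV. \<Sum>d\<in>UNIV. (w $ a * x (Some a)) * ((w $ b * x (Some b)) * ((v $ c * x (Some c)) * (v $ d * x (Some d)))))"
      unfolding inner_xb by (rule prod4)
    finally show "indicator {0} (x None) * ((w \<bullet> xb x)^2 * (v \<bullet> xb x)^2) = (\<Sum>a\<in>UNIV. \<Sum>b\<in>UNIV. \<Sum>c\<in>UNIV. \<Sum>d\<in>UNIV. (w$a * w$b * v$c * v$d) * M a b c d x)"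
      by (simp add: M_def sum_distrib_left mult_ac)
  qed
  show "integrable (PP \<theta>) (\<lambda>x::'m option \<Rightarrow> real. indicator {0} (x None) * ((w \<bullet> xb x)^2 * (v \<bullet> xb x)^2))"
    unfolding eq by (intro Bochner_Integration.integrable_sum Bochner_Integration.integrable_mult_right Mi)
  have "(\<integral>x. indicator {0} (x None) * ((w \<bullet> xb x)^2 * (v \<bullet> xb x)^2) \<partial>PP \<theta>)
     = (\<Sum>a\<in>UNIV. \<Sum>b\<in>UNIV. \<Sum>c\<in>UNIV. \<Sum>d\<in>UNIV. (w$a * w$b * v$c * v$d) * integral\<^sup>L (PP \<theta>) (M a b c d))"
    unfolding eq
    by (simp add: Bochner_Integration.integral_sum integrable_sum integrable_mult_right Mi)
  also have "\<dots> = (\<Sum>a\<in>UNIV. \<Sum>b\<in>UNIV. \<Sum>c\<in>UNIV. \<Sum>d\<in>UNIV. (w$a * w$b * v$c * v$d) *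
       ((1-\<theta>) * (\<theta>^2 * ((if a = b \<and> c = d then 1 else 0) + (if a = c \<and> b = d then 1 else 0) + (if a = d \<and> b = c then 1 else 0))
         + (3*\<theta> - 3*\<theta>^2) * (if a = b \<and> b = c \<and> c = d then 1 else 0))))"
    unfolding M_def E4[OF th] ..
  also have "\<dots> = (1-\<theta>) * \<theta>^2 * (\<Sum>a\<in>UNIV. \<Sum>b\<in>UNIV. \<Sum>c\<in>UNIV. \<Sum>d\<in>UNIV. (w$a * w$b * v$c * v$d) * (if a = b \<and> c = d then 1 else 0))
     + (1-\<theta>) * \<theta>^2 * (\<Sum>a\<in>UNIV. \<Sum>b\<in>UNIV. \<Sum>c\<in>UNIV. \<Sum>d\<in>UNIV. (w$a * w$b * v$c * v$d) * (if a = c \<and> b = d then 1 else 0))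
     + (1-\<theta>) * \<theta>^2 * (\<Sum>a\<in>UNIV. \<Sum>b\<in>UNIV. \<Sum>c\<in>UNIV. \<Sum>d\<in>UNIV. (w$a * w$b * v$c * v$d) * (if a = d \<and> b = c then 1 else 0))
     + (1-\<theta>) * (3*\<theta> - 3*\<theta>^2) * (\<Sum>a\<in>UNIV. \<Sum>b\<in>UNIV. \<Sum>c\<in>UNIV. \<Sum>d\<in>UNIV. (w$a * w$b * v$c * v$d) * (if a = b \<and> b = c \<and> c = d then 1 else 0))"
    by (simp only: sum_distrib_left sum.distrib[symmetric] distrib_left distrib_right mult_ac)
  also have "\<dots> = (1-\<theta>) * \<theta>^2 * (\<Sum>a\<in>UNIV. \<Sum>c\<in>UNIV. w$a * w$a * v$c * v$c)
     + (1-\<theta>) * \<theta>^2 * (\<Sum>a\<in>UNIV. \<Sum>b\<in>UNIV. w$a * w$b * v$a * v$b)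
     + (1-\<theta>) * \<theta>^2 * (\<Sum>a\<in>UNIV. \<Sum>b\<in>UNIV. w$a * w$b * v$b * v$a)
     + (1-\<theta>) * (3*\<theta> - 3*\<theta>^2) * (\<Sum>a\<in>UNIV. w$a * w$a * v$a * v$a)"
    unfolding H1 H2 H3 H4 ..
  also have "\<dots> = (1-\<theta>) * (\<theta>^2 * ((w \<bullet> w) * (v \<bullet> v) + 2 * (w \<bullet> v)^2) + (3*\<theta> - 3*\<theta>^2) * (\<Sum>a\<in>UNIV. (w$a)^2 * (v$a)^2))"
  proof -
    have s1: "(\<Sum>a\<in>UNIV. \<Sum>c\<in>UNIV. w$a * w$a * v$c * v$c) = (w \<bullet> w) * (v \<bullet> v)"
      by (simp only: inner_vec_def inner_real_def sum_product) (simp add: mult_ac)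
    have s2: "(\<Sum>a\<in>UNIV. \<Sum>b\<in>UNIV. w$a * w$b * v$a * v$b) = (w \<bullet> v)^2"
      by (simp only: inner_vec_def inner_real_def power2_eq_square sum_product) (simp add: mult_ac)
    have s3: "(\<Sum>a\<in>UNIV. \<Sum>b\<in>UNIV. w$a * w$b * v$b * v$a) = (w \<bullet> v)^2"
      by (simp only: inner_vec_def inner_real_def power2_eq_square sum_product) (simp add: mult_ac)
    have s4: "(\<Sum>a\<in>UNIV. w$a * w$a * v$a * v$a) = (\<Sum>a\<in>UNIV. (w$a)^2 * (v$a)^2)"
      by (simp add: power2_eq_square mult_ac)
    show ?thesis unfolding s1 s2 s3 s4 by (simp add: algebra_simps)
  qed
  finally show "(\<integral>x. indicator {0} (x None) * ((w \<bullet> xb x)^2 * (v \<bullet> xb x)^2) \<partial>PP \<theta>)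
      = (1-\<theta>) * (\<theta>^2 * ((w \<bullet> w) * (v \<bullet> v) + 2 * (w \<bullet> v)^2) + (3*\<theta> - 3*\<theta>^2) * (\<Sum>a\<in>UNIV. (w$a)^2 * (v$a)^2))" .
qed


lemma E_quad:
  fixes v :: "real^'m::finite"
  assumes th: "0 \<le> \<theta>" "\<theta> \<le> 1"
  shows "integrable (PP \<theta>) (\<lambda>x::'m option \<Rightarrow> real. indicator {0} (x None) * (v \<bullet> xb x)^2)"
    and "(\<integral>x. indicator {0} (x None) * (v \<bullet> xb x)^2 \<partial>PP \<theta>) = (1-\<theta>) * \<theta> * (v \<bullet> v)"
proof -
  define M where "M = (\<lambda>a b (x::'m option \<Rightarrow> real). indicator {0} (x None) * (x (Some a) * x (Some b)))"
  have Mi: "integrable (PP \<theta>) (M a b)" for a b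
    using PP_ind_list(1)[OF th, of "[a,b]"] by (simp add: M_def)
  have eq: "(\<lambda>x::'m option \<Rightarrow> real. indicator {0} (x None) * (v \<bullet> xb x)^2)
    = (\<lambda>x. \<Sum>a\<in>UNIV. \<Sum>b\<in>UNIV. (v$a * v$b) * M a b x)"
  proof (rule ext)
    fix x :: "'m option \<Rightarrow> real"
    have "(v \<bullet> xb x)^2 = (\<Sum>a\<in>UNIV. \<Sum>b\<in>UNIV. (v $ a * x (Some a)) * (v $ b * x (Some b)))"
      unfolding inner_xb power2_eq_square by (rule sum_product)
    then show "indicator {0} (x None) * (v \<bullet> xb x)^2 = (\<Sum>a\<in>UNIV. \<Sum>b\<in>UNIV. (v$a * v$b) * M a b x)"
      by (simp add: M_def sum_distrib_left mult_ac)
  qed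
  show "integrable (PP \<theta>) (\<lambda>x::'m option \<Rightarrow> real. indicator {0} (x None) * (v \<bullet> xb x)^2)"
    unfolding eq by (intro Bochner_Integration.integrable_sum Bochner_Integration.integrable_mult_right Mi)
  have "(\<integral>x. indicator {0} (x None) * (v \<bullet> xb x)^2 \<partial>PP \<theta>)
     = (\<Sum>a\<in>UNIV. \<Sum>b\<in>UNIV. (v$a * v$b) * integral\<^sup>L (PP \<theta>) (M a b))"
    unfolding eq
    by (simp add: Bochner_Integration.integral_sum integrable_sum integrable_mult_right Mi)
  also have "\<dots> = (\<Sum>a\<in>UNIV. \<Sum>b\<in>UNIV. ((1-\<theta>) * \<theta> * (v$a * v$a)) * (if b = a then 1 else 0))"
    unfolding M_def E2[OF th] by (intro sum.cong refl) auto
  also have "\<dots> = (1-\<theta>) * \<theta> * (v \<bullet> v)"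
    by (simp add: dmult inner_vec_def sum_distrib_left)
  finally show "(\<integral>x. indicator {0} (x None) * (v \<bullet> xb x)^2 \<partial>PP \<theta>) = (1-\<theta>) * \<theta> * (v \<bullet> v)" .
qed

lemma E_quart_le:
  fixes w v :: "real^'m::finite"
  assumes th: "0 \<le> \<theta>" "\<theta> \<le> 1"
  shows "(\<integral>x. indicator {0} (x None) * ((w \<bullet> xb x)^2 * (v \<bullet> xb x)^2) \<partial>PP \<theta>) \<le> 3 * (1-\<theta>) * \<theta> * ((w \<bullet> w) * (v \<bullet> v))"
proof -
  define X where "X = (w \<bullet> w) * (v \<bullet> v)"
  have X0: "0 \<le> X" unfolding X_def by simp
  have cs: "(w \<bullet> v)^2 \<le> X"
  proof -
    have "\<bar>w \<bullet> v\<bar> \<le> norm w * norm v" by (rule Cauchy_Schwarz_ineq2)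
    then have "\<bar>w \<bullet> v\<bar>^2 \<le> (norm w * norm v)^2" by (rule power_mono) simp
    then show ?thesis unfolding X_def by (simp add: power_mult_distrib power2_norm_eq_inner)
  qed
  have S: "(\<Sum>a\<in>UNIV. (w$a)^2 * (v$a)^2) \<le> X"
  proof -
    have "(\<Sum>a\<in>UNIV. (w$a)^2 * (v$a)^2) \<le> (\<Sum>a\<in>UNIV. \<Sum>c\<in>UNIV. (w$a)^2 * (v$c)^2)"
      by (intro sum_mono member_le_sum[where f="\<lambda>c. (w$_)^2 * (v$c)^2"]) auto
    also have "\<dots> = X" unfolding X_def
      by (simp only: inner_vec_def inner_real_def sum_product power2_eq_square)
    finally show ?thesis .
  qed
  have "\<theta>^2 * (X + 2 * (w \<bullet> v)^2) + (3*\<theta> - 3*\<theta>^2) * (\<Sum>a\<in>UNIV. (w$a)^2 * (v$a)^2)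
      \<le> \<theta>^2 * (X + 2 * X) + (3*\<theta> - 3*\<theta>^2) * X"
  proof (intro add_mono mult_left_mono)
    show "0 \<le> 3*\<theta> - 3*\<theta>^2" using th by (simp add: power2_eq_square mult_left_le)
  qed (use cs S in auto)
  also have "\<dots> = 3 * \<theta> * X" by (simp add: algebra_simps power2_eq_square)
  finally have "\<theta>^2 * (X + 2 * (w \<bullet> v)^2) + (3*\<theta> - 3*\<theta>^2) * (\<Sum>a\<in>UNIV. (w$a)^2 * (v$a)^2) \<le> 3 * \<theta> * X" .
  then have "(1-\<theta>) * (\<theta>^2 * (X + 2 * (w \<bullet> v)^2) + (3*\<theta> - 3*\<theta>^2) * (\<Sum>a\<in>UNIV. (w$a)^2 * (v$a)^2)) \<le> (1-\<theta>) * (3 * \<theta> * X)"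
    using th by (intro mult_left_mono) auto
  then show ?thesis unfolding E_quart(2)[OF th] X_def[symmetric] by (simp add: mult_ac)
qed

definition sf :: "real^'m::finite \<Rightarrow> real" where "sf u = sqrt (1 - (norm u)^2)"

lemma sf_pos: "norm u < 1 \<Longrightarrow> 0 < sf u"
  unfolding sf_def by (simp add: abs_square_less_1)

lemma sf_deriv: assumes "norm u < 1"
  shows "(sf has_derivative (\<lambda>v. - (u \<bullet> v) / sf u)) (at u)"
proof -
  have e: "sf = (\<lambda>u. sqrt (1 - u \<bullet> u))" by (rule ext) (simp add: sf_def power2_norm_eq_inner)
  have p: "0 < 1 - u \<bullet> u" using assms by (simp add: power2_norm_eq_inner[symmetric] abs_square_less_1)
  have d0: "((\<lambda>u. u \<bullet> u) has_derivative (\<lambda>v. u \<bullet> v + v \<bullet> u)) (at u)"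
    by (rule has_derivative_inner[OF has_derivative_ident has_derivative_ident])
  have d1: "((\<lambda>u. 1 - u \<bullet> u) has_derivative (\<lambda>v. 0 - (u \<bullet> v + v \<bullet> u))) (at u)"
    by (rule has_derivative_diff[OF has_derivative_const d0])
  have d2: "((\<lambda>u. sqrt (1 - u \<bullet> u)) has_derivative (\<lambda>v. (0 - (u \<bullet> v + v \<bullet> u)) * (inverse (sqrt (1 - u \<bullet> u)) / 2))) (at u)"
    by (rule has_derivative_real_sqrt[OF p d1])
  have "(\<lambda>v. (0 - (u \<bullet> v + v \<bullet> u)) * (inverse (sqrt (1 - u \<bullet> u)) / 2)) = (\<lambda>v. - (u \<bullet> v) / sqrt (1 - u \<bullet> u))"
    by (rule ext) (simp add: inner_commute field_simps)
  then show ?thesis unfolding e using d2 by simp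
qed

definition zf :: "real^'m::finite \<Rightarrow> ('m option \<Rightarrow> real) \<Rightarrow> real" where
  "zf u x = u \<bullet> xb x + sf u * x None"
definition af :: "real^'m::finite \<Rightarrow> ('m option \<Rightarrow> real) \<Rightarrow> real^'m" where
  "af u x = xb x - (x None / sf u) *\<^sub>R u"

lemma sf_deriv': "norm u < 1 \<Longrightarrow> (sf has_derivative (\<lambda>v. - (u \<bullet> v) / sf u)) (at u within S)"
  using sf_deriv has_derivative_at_withinI by blast

lemma zf_deriv: assumes "norm u < 1"
  shows "((\<lambda>u. zf u x) has_derivative (\<lambda>v. af u x \<bullet> v)) (at u)"
proof -
  have "((\<lambda>u. u \<bullet> xb x + sf u * x None) has_derivative (\<lambda>v. v \<bullet> xb x + (- (u \<bullet> v) / sf u) * x None)) (at u)"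
    by (intro has_derivative_add has_derivative_inner_left has_derivative_ident has_derivative_mult_left sf_deriv assms)
  moreover have "(\<lambda>v. v \<bullet> xb x + (- (u \<bullet> v) / sf u) * x None) = (\<lambda>v. af u x \<bullet> v)"
    by (rule ext) (simp add: af_def inner_diff_right algebra_simps inner_commute)
  ultimately show ?thesis unfolding zf_def by simp
qed

lemma hmu_deriv: assumes "\<mu> \<noteq> 0" shows "(h_mu \<mu> has_real_derivative tanh (z / \<mu>)) (at z)"
proof -
  have a: "((\<lambda>z. z/\<mu>) has_real_derivative 1/\<mu>) (at z)"
    using DERIV_cdivide[OF DERIV_ident, of \<mu>] by simp
  have b: "((\<lambda>z. cosh (z/\<mu>)) has_real_derivative sinh(z/\<mu>) * (1/\<mu>)) (at z)"
    by (rule has_field_derivative_cosh[OF a])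
  have c: "((\<lambda>z. ln (cosh (z/\<mu>))) has_real_derivative (1 / cosh (z/\<mu>)) * (sinh(z/\<mu>) * (1/\<mu>))) (at z)"
    by (rule DERIV_chain2[OF DERIV_ln_divide b]) simp
  have "((\<lambda>z. \<mu> * ln (cosh (z / \<mu>))) has_real_derivative \<mu> * ((1 / cosh (z/\<mu>)) * (sinh (z/\<mu>) * (1 / \<mu>)))) (at z)"
    by (rule DERIV_cmult[OF c])
  moreover have "\<mu> * ((1 / cosh (z/\<mu>)) * (sinh (z/\<mu>) * (1 / \<mu>))) = tanh (z / \<mu>)"
    using assms by (simp add: tanh_def field_simps)
  ultimately show ?thesis unfolding h_mu_def[abs_def] by simp
qed


definition gf :: "real \<Rightarrow> real^'m::finite \<Rightarrow> ('m option \<Rightarrow> real) \<Rightarrow> real^'m" where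
  "gf \<mu> u x = tanh (zf u x / \<mu>) *\<^sub>R af u x"

definition D2 :: "real \<Rightarrow> real^'m::finite \<Rightarrow> ('m option \<Rightarrow> real) \<Rightarrow> real^'m \<Rightarrow> real^'m" where
  "D2 \<mu> u x v = ((1 - (tanh (zf u x / \<mu>))^2) * (af u x \<bullet> v) / \<mu>) *\<^sub>R af u x
     + tanh (zf u x / \<mu>) *\<^sub>R (- ((x None / sf u) *\<^sub>R v) - (x None * (u \<bullet> v) / sf u ^ 3) *\<^sub>R u)"

lemma phi1_deriv: assumes "norm u < 1" "\<mu> \<noteq> 0"
  shows "((\<lambda>u. h_mu \<mu> (zf u x)) has_derivative (\<lambda>v. gf \<mu> u x \<bullet> v)) (at u)"
proof -
  have "((\<lambda>u. h_mu \<mu> (zf u x)) has_derivative (\<lambda>v. (af u x \<bullet> v) * tanh (zf u x / \<mu>))) (at u)"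
    by (rule DERIV_compose_FDERIV[OF hmu_deriv[OF assms(2)] zf_deriv[OF assms(1)]])
  moreover have "(\<lambda>v. (af u x \<bullet> v) * tanh (zf u x / \<mu>)) = (\<lambda>v. gf \<mu> u x \<bullet> v)"
    by (rule ext) (simp add: gf_def)
  ultimately show ?thesis by simp
qed

lemma af_deriv: assumes "norm u < 1"
  shows "((\<lambda>u. af u x) has_derivative (\<lambda>v. - ((x None / sf u) *\<^sub>R v) - (x None * (u \<bullet> v) / sf u ^ 3) *\<^sub>R u)) (at u)"
proof -
  have s0: "sf u \<noteq> 0" using sf_pos[OF assms] by simp
  have d1: "((\<lambda>u. x None / sf u) has_derivative (\<lambda>h. (0 * sf u - x None * (- (u \<bullet> h) / sf u)) / (sf u * sf u))) (at u)"
    by (rule has_derivative_divide'[OF has_derivative_const sf_deriv[OF assms] s0])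
  have d2: "((\<lambda>u. (x None / sf u) *\<^sub>R u) has_derivative (\<lambda>h. (x None / sf u) *\<^sub>R h + ((0 * sf u - x None * (- (u \<bullet> h) / sf u)) / (sf u * sf u)) *\<^sub>R u)) (at u)"
    by (rule has_derivative_scaleR[OF d1 has_derivative_ident])
  have d3: "((\<lambda>u. af u x) has_derivative (\<lambda>h. 0 - ((x None / sf u) *\<^sub>R h + ((0 * sf u - x None * (- (u \<bullet> h) / sf u)) / (sf u * sf u)) *\<^sub>R u))) (at u)"
    unfolding af_def by (rule has_derivative_diff[OF has_derivative_const d2])
  moreover have "(\<lambda>h. 0 - ((x None / sf u) *\<^sub>R h + ((0 * sf u - x None * (- (u \<bullet> h) / sf u)) / (sf u * sf u)) *\<^sub>R u))
     = (\<lambda>v. - ((x None / sf u) *\<^sub>R v) - (x None * (u \<bullet> v) / sf u ^ 3) *\<^sub>R u)"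
    using s0 by (intro ext) (simp add: power3_eq_cube field_simps)
  ultimately show ?thesis by simp
qed

lemma gf_deriv: assumes "norm u < 1" "\<mu> \<noteq> 0"
  shows "((\<lambda>u. gf \<mu> u x) has_derivative D2 \<mu> u x) (at u)"
proof -
  have a: "((\<lambda>u. zf u x / \<mu>) has_derivative (\<lambda>v. (af u x \<bullet> v) / \<mu>)) (at u)"
    using has_derivative_divide'[OF zf_deriv[OF assms(1)] has_derivative_const, of \<mu>] assms(2) by simp
  have b: "((\<lambda>u. tanh (zf u x / \<mu>)) has_derivative (\<lambda>v. (af u x \<bullet> v) / \<mu> * (1 - (tanh (zf u x / \<mu>))^2))) (at u)"
  proof -
    have t: "((\<lambda>t. tanh t) has_real_derivative (1 - (tanh (zf u x / \<mu>))^2) * 1) (at (zf u x / \<mu>))"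
      by (rule has_field_derivative_tanh) (simp_all add: DERIV_ident)
    show ?thesis using DERIV_compose_FDERIV[OF t a] by simp
  qed
  have c: "((\<lambda>u. gf \<mu> u x) has_derivative (\<lambda>v. tanh (zf u x / \<mu>) *\<^sub>R (- ((x None / sf u) *\<^sub>R v) - (x None * (u \<bullet> v) / sf u ^ 3) *\<^sub>R u) + ((af u x \<bullet> v) / \<mu> * (1 - (tanh (zf u x / \<mu>))^2)) *\<^sub>R af u x)) (at u)"
    unfolding gf_def[abs_def] by (rule has_derivative_scaleR[OF b af_deriv[OF assms(1)]])
  moreover have "(\<lambda>v. tanh (zf u x / \<mu>) *\<^sub>R (- ((x None / sf u) *\<^sub>R v) - (x None * (u \<bullet> v) / sf u ^ 3) *\<^sub>R u) + ((af u x \<bullet> v) / \<mu> * (1 - (tanh (zf u x / \<mu>))^2)) *\<^sub>R af u x) = D2 \<mu> u x"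
  proof (intro ext)
    fix v
    have e: "(af u x \<bullet> v) / \<mu> * (1 - (tanh (zf u x / \<mu>))^2) = (1 - (tanh (zf u x / \<mu>))^2) * (af u x \<bullet> v) / \<mu>" by simp
    show "tanh (zf u x / \<mu>) *\<^sub>R (- ((x None / sf u) *\<^sub>R v) - (x None * (u \<bullet> v) / sf u ^ 3) *\<^sub>R u) + ((af u x \<bullet> v) / \<mu> * (1 - (tanh (zf u x / \<mu>))^2)) *\<^sub>R af u x = D2 \<mu> u x v"
      unfolding D2_def e by (rule add.commute)
  qed
  ultimately show ?thesis by simp
qed

lemma measurable_vec_lambda[measurable]:
  fixes f :: "'a \<Rightarrow> 'n::finite \<Rightarrow> real"
  assumes "\<And>j. (\<lambda>x. f x j) \<in> borel_measurable M"
  shows "(\<lambda>x. \<chi> j. f x j) \<in> borel_measurable M"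
proof (subst borel_measurable_euclidean_space, intro ballI)
  fix b :: "real^'n" assume "b \<in> Basis"
  then obtain i where b: "b = axis i 1" by (auto simp: Basis_vec_def)
  show "(\<lambda>x. (\<chi> j. f x j) \<bullet> b) \<in> borel_measurable M"
    unfolding b inner_axis using assms[of i] by simp
qed

lemma meas_comp[measurable]: "(\<lambda>x. x i) \<in> borel_measurable (PP \<theta> :: ('m::finite option \<Rightarrow> real) measure)"
proof -
  have "(\<lambda>x. x i) \<in> measurable (PP \<theta> :: ('m::finite option \<Rightarrow> real) measure) (BG \<theta>)"
    by (rule measurable_component_singleton) simp
  moreover have "measurable (PP \<theta> :: ('m::finite option \<Rightarrow> real) measure) (BG \<theta>) = borel_measurable (PP \<theta> :: ('m::finite option \<Rightarrow> real) measure)"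
    by (rule measurable_cong_sets) simp_all
  ultimately show ?thesis by simp
qed

lemma measurable_cosh[measurable]: "(cosh :: real \<Rightarrow> real) \<in> borel_measurable borel"
  by (rule borel_measurable_continuous_onI) (intro continuous_intros)
lemma measurable_tanh[measurable]: "(tanh :: real \<Rightarrow> real) \<in> borel_measurable borel"
  by (rule borel_measurable_continuous_onI) (intro continuous_intros, simp)

lemma meas_phi1: "(\<lambda>x. h_mu \<mu> (zf u x)) \<in> borel_measurable (PP \<theta> :: ('m::finite option \<Rightarrow> real) measure)"
  unfolding h_mu_def zf_def xb_def by measurable

lemma meas_gf: "(\<lambda>x. gf \<mu> u x) \<in> borel_measurable (PP \<theta> :: ('m::finite option \<Rightarrow> real) measure)"
  unfolding gf_def af_def zf_def xb_def by measurable

lemma meas_gfv: "(\<lambda>x. gf \<mu> u x \<bullet> v) \<in> borel_measurable (PP \<theta> :: ('m::finite option \<Rightarrow> real) measure)"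
  using meas_gf by measurable

lemma meas_D2: "(\<lambda>x. D2 \<mu> u x v) \<in> borel_measurable (PP \<theta> :: ('m::finite option \<Rightarrow> real) measure)"
  unfolding D2_def af_def zf_def xb_def by measurable


definition l1 :: "('m::finite option \<Rightarrow> real) \<Rightarrow> real" where "l1 x = (\<Sum>i\<in>UNIV. \<bar>x i\<bar>)"

lemma l1_nonneg: "0 \<le> l1 x" unfolding l1_def by (simp add: sum_nonneg)

lemma xn_le: "\<bar>x None\<bar> \<le> l1 x"
  unfolding l1_def by (rule member_le_sum) auto

lemma xb_le: "norm (xb x) \<le> l1 x"
proof -
  have "norm (xb x) \<le> (\<Sum>j\<in>UNIV. \<bar>xb x $ j\<bar>)" by (rule norm_le_l1_cart)
  also have "\<dots> = (\<Sum>j\<in>UNIV. \<bar>x (Some j)\<bar>)" by (simp add: xb_def)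
  also have "\<dots> \<le> l1 x" unfolding l1_def sum_option by simp
  finally show ?thesis .
qed

lemma l1_int: assumes th: "0 \<le> \<theta>" "\<theta> \<le> 1"
  shows "integrable (PP \<theta>) (l1 :: ('m::finite option \<Rightarrow> real) \<Rightarrow> real)"
    and "integrable (PP \<theta>) (\<lambda>x::'m::finite option \<Rightarrow> real. (l1 x)^2)"
proof -
  have a: "integrable (PP \<theta>) (\<lambda>x::'m::finite option \<Rightarrow> real. \<bar>x i\<bar>)" for i
    using PP_abs_list[OF th, of "[i]"] by simp
  have b: "integrable (PP \<theta>) (\<lambda>x::'m::finite option \<Rightarrow> real. \<bar>x i\<bar> * \<bar>x j\<bar>)" for i j
    using PP_abs_list[OF th, of "[i,j]"] by simp
  show "integrable (PP \<theta>) (l1 :: ('m::finite option \<Rightarrow> real) \<Rightarrow> real)"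
    unfolding l1_def[abs_def] by (intro Bochner_Integration.integrable_sum a)
  have e: "(\<lambda>x::'m::finite option \<Rightarrow> real. (l1 x)^2) = (\<lambda>x. \<Sum>i\<in>UNIV. \<Sum>j\<in>UNIV. \<bar>x i\<bar> * \<bar>x j\<bar>)"
    by (rule ext) (simp add: l1_def power2_eq_square sum_product)
  show "integrable (PP \<theta>) (\<lambda>x::'m::finite option \<Rightarrow> real. (l1 x)^2)"
    unfolding e by (intro Bochner_Integration.integrable_sum b)
qed

lemma af_le: assumes "norm u \<le> 1" "0 < sf u"
  shows "norm (af u x) \<le> (1 + 1 / sf u) * l1 x"
proof -
  have "norm (af u x) \<le> norm (xb x) + norm ((x None / sf u) *\<^sub>R u)"
    unfolding af_def by (rule norm_triangle_ineq4)
  also have "norm ((x None / sf u) *\<^sub>R u) = \<bar>x None\<bar> / sf u * norm u"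
    using assms by (simp add: abs_div)
  also have "\<dots> \<le> l1 x / sf u * 1"
    using assms xn_le[of x] by (intro mult_mono divide_right_mono) auto
  finally show ?thesis using xb_le[of x] by (simp add: algebra_simps)
qed

lemma gf_le: assumes "norm u \<le> 1" "0 < sf u"
  shows "norm (gf \<mu> u x) \<le> (1 + 1 / sf u) * l1 x"
proof -
  have t: "\<bar>tanh (zf u x / \<mu>)\<bar> \<le> 1" using tanh_real_bounds[of "zf u x / \<mu>"] by auto
  have "norm (gf \<mu> u x) = \<bar>tanh (zf u x / \<mu>)\<bar> * norm (af u x)" by (simp add: gf_def)
  also have "\<dots> \<le> 1 * norm (af u x)" using t by (intro mult_right_mono) auto
  finally show ?thesis using af_le[OF assms, of x] by simp
qed

lemma onorm_gf: assumes "norm u \<le> 1" "0 < sf u"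
  shows "onorm (\<lambda>v. gf \<mu> u x \<bullet> v) \<le> (1 + 1 / sf u) * l1 x"
proof (rule onorm_le)
  fix v
  have "norm (gf \<mu> u x \<bullet> v) \<le> norm (gf \<mu> u x) * norm v" by (simp add: Cauchy_Schwarz_ineq2)
  also have "\<dots> \<le> (1 + 1 / sf u) * l1 x * norm v" using gf_le[OF assms] by (intro mult_right_mono) auto
  finally show "norm (gf \<mu> u x \<bullet> v) \<le> (1 + 1 / sf u) * l1 x * norm v" .
qed

lemma D2_le: assumes u: "norm u \<le> 1/2" and s: "1/2 \<le> sf u" and mu: "0 < \<mu>"
  shows "norm (D2 \<mu> u x v) \<le> (9 / \<mu> * (l1 x)^2 + 4 * l1 x) * norm v"
proof -
  define t where "t = tanh (zf u x / \<mu>)"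
  have t: "\<bar>t\<bar> \<le> 1" using tanh_real_bounds[of "zf u x / \<mu>"] unfolding t_def by auto
  have "t^2 = \<bar>t\<bar>^2" by simp
  also have "\<dots> \<le> 1" using t by (intro power_le_one) auto
  finally have t2: "\<bar>1 - t^2\<bar> \<le> 1" by (simp add: abs_le_iff)
  have sp: "0 < sf u" using s by simp
  have A: "norm (af u x) \<le> 3 * l1 x"
  proof -
    have "norm (af u x) \<le> (1 + 1 / sf u) * l1 x" using u sp by (intro af_le) auto
    also have "1 / sf u \<le> 2" using s sp by (simp add: divide_le_eq)
    then have "(1 + 1 / sf u) * l1 x \<le> 3 * l1 x" using l1_nonneg[of x] by (intro mult_right_mono) auto
    finally show ?thesis .
  qed
  have n1: "norm (((1 - t^2) * (af u x \<bullet> v) / \<mu>) *\<^sub>R af u x) \<le> 9 / \<mu> * (l1 x)^2 * norm v"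
  proof -
    have "norm (((1 - t^2) * (af u x \<bullet> v) / \<mu>) *\<^sub>R af u x) = \<bar>1 - t^2\<bar> * \<bar>af u x \<bullet> v\<bar> / \<mu> * norm (af u x)"
      using mu by (simp add: abs_mult)
    also have "\<dots> \<le> 1 * (norm (af u x) * norm v) / \<mu> * norm (af u x)"
      using t2 mu by (intro mult_right_mono divide_right_mono mult_mono Cauchy_Schwarz_ineq2) auto
    also have "\<dots> = (norm (af u x))^2 * norm v / \<mu>" by (simp add: power2_eq_square)
    also have "\<dots> \<le> (3 * l1 x)^2 * norm v / \<mu>"
      using A mu by (intro divide_right_mono mult_right_mono power_mono) auto
    finally show ?thesis by (simp add: power_mult_distrib)
  qed
  have n2: "norm (t *\<^sub>R (- ((x None / sf u) *\<^sub>R v) - (x None * (u \<bullet> v) / sf u ^ 3) *\<^sub>R u)) \<le> 4 * l1 x * norm v"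
  proof -
    have i1: "1 / sf u \<le> 2" using s sp by (simp add: divide_le_eq)
    have i3: "1 / sf u ^ 3 \<le> 8"
    proof -
      have "(1/2::real)^3 \<le> sf u ^ 3" using s by (intro power_mono) auto
      moreover have "(1/2::real)^3 = 1/8" by (simp add: power_divide)
      ultimately have h: "1 \<le> 8 * sf u ^ 3" by linarith
      then show ?thesis using sp by (simp add: divide_le_eq)
    qed
    have "norm (t *\<^sub>R (- ((x None / sf u) *\<^sub>R v) - (x None * (u \<bullet> v) / sf u ^ 3) *\<^sub>R u))
       \<le> 1 * (norm ((x None / sf u) *\<^sub>R v) + norm ((x None * (u \<bullet> v) / sf u ^ 3) *\<^sub>R u))"
    proof -
      have "norm (- ((x None / sf u) *\<^sub>R v) - (x None * (u \<bullet> v) / sf u ^ 3) *\<^sub>R u) \<le> norm (- ((x None / sf u) *\<^sub>R v)) + norm ((x None * (u \<bullet> v) / sf u ^ 3) *\<^sub>R u)"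
        by (rule norm_triangle_ineq4)
      then have "norm (- ((x None / sf u) *\<^sub>R v) - (x None * (u \<bullet> v) / sf u ^ 3) *\<^sub>R u) \<le> norm ((x None / sf u) *\<^sub>R v) + norm ((x None * (u \<bullet> v) / sf u ^ 3) *\<^sub>R u)"
        by simp
      then show ?thesis using t by (simp only: norm_scaleR) (intro mult_mono, auto)
    qed
    also have "norm ((x None / sf u) *\<^sub>R v) = \<bar>x None\<bar> * (1 / sf u) * norm v" using sp by (simp add: abs_div)
    also have "\<dots> \<le> \<bar>x None\<bar> * 2 * norm v" using i1 by (intro mult_right_mono mult_left_mono) auto
    also have "norm ((x None * (u \<bullet> v) / sf u ^ 3) *\<^sub>R u) = \<bar>x None\<bar> * \<bar>u \<bullet> v\<bar> * (1 / sf u ^ 3) * norm u"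
      using sp by (simp add: abs_mult abs_div)
    also have "\<dots> \<le> \<bar>x None\<bar> * (norm u * norm v) * 8 * (1/2)"
      using i3 u sp by (intro mult_mono Cauchy_Schwarz_ineq2 mult_left_mono) auto
    also have "\<dots> \<le> \<bar>x None\<bar> * ((1/2) * norm v) * 8 * (1/2)"
      using u by (intro mult_mono mult_right_mono mult_left_mono) auto
    finally have "norm (t *\<^sub>R (- ((x None / sf u) *\<^sub>R v) - (x None * (u \<bullet> v) / sf u ^ 3) *\<^sub>R u)) \<le> 4 * \<bar>x None\<bar> * norm v"
      by (simp add: mult_ac)
    also have "\<dots> \<le> 4 * l1 x * norm v" using xn_le[of x] by (intro mult_right_mono) auto
    finally show ?thesis .
  qed
  have "norm (D2 \<mu> u x v) \<le> norm (((1 - t^2) * (af u x \<bullet> v) / \<mu>) *\<^sub>R af u x) + norm (t *\<^sub>R (- ((x None / sf u) *\<^sub>R v) - (x None * (u \<bullet> v) / sf u ^ 3) *\<^sub>R u))"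
    unfolding D2_def t_def[symmetric] by (rule norm_triangle_ineq)
  also have "\<dots> \<le> 9 / \<mu> * (l1 x)^2 * norm v + 4 * l1 x * norm v" using n1 n2 by (rule add_mono)
  finally show ?thesis by (simp add: algebra_simps)
qed

lemma qvec_sum: "(\<Sum>i\<in>UNIV. qvec w i * x i) = zf w x"
  by (simp add: sum_option qvec_def zf_def inner_xb sf_def add.commute)

lemma obj_eq: "obj \<theta> \<mu> = (\<lambda>u. \<integral>x. h_mu \<mu> (zf u x) \<partial>PP \<theta>)"
  by (rule ext) (simp add: obj_def qvec_sum)

lemma ln_cosh_le: "ln (cosh y) \<le> \<bar>y::real\<bar>"
proof -
  have "cosh y \<le> exp \<bar>y\<bar>"
  proof (cases "y \<ge> 0")
    case True
    then have "exp (-y) \<le> exp y" by (simp only: exp_le_cancel_iff)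
    then show ?thesis using True by (simp add: cosh_field_def)
  next
    case False
    then have "exp y \<le> exp (-y)" by (simp only: exp_le_cancel_iff)
    then show ?thesis using False by (simp add: cosh_field_def)
  qed
  then have "ln (cosh y) \<le> ln (exp \<bar>y\<bar>)" by (subst ln_le_cancel_iff) auto
  then show ?thesis by simp
qed

lemma hmu_abs_le: assumes "0 < \<mu>" shows "\<bar>h_mu \<mu> z\<bar> \<le> \<bar>z\<bar>"
proof -
  have "0 \<le> ln (cosh (z/\<mu>))" using cosh_real_ge_1 by simp
  moreover have "ln (cosh (z/\<mu>)) \<le> \<bar>z\<bar> / \<mu>" using ln_cosh_le[of "z/\<mu>"] assms by (simp add: abs_div)
  ultimately show ?thesis using assms unfolding h_mu_def by (simp add: abs_mult field_simps)
qed

lemma sf_le1: "sf u \<le> 1" unfolding sf_def by simp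

lemma zf_le: assumes "norm u \<le> 1" shows "\<bar>zf u x\<bar> \<le> 2 * l1 x"
proof -
  have "\<bar>zf u x\<bar> \<le> \<bar>u \<bullet> xb x\<bar> + \<bar>sf u * x None\<bar>" unfolding zf_def by (rule abs_triangle_ineq)
  also have "\<bar>u \<bullet> xb x\<bar> \<le> norm u * norm (xb x)" by (rule Cauchy_Schwarz_ineq2)
  also have "\<dots> \<le> 1 * l1 x" using assms xb_le[of x] by (intro mult_mono) auto
  also have "\<bar>sf u * x None\<bar> \<le> 1 * l1 x"
  proof -
    have "(norm u)^2 \<le> 1" using assms by (intro power_le_one) auto
    then have "\<bar>sf u\<bar> \<le> 1" using sf_le1[of u] by (simp add: sf_def)
    then show ?thesis unfolding abs_mult using xn_le[of x] by (intro mult_mono) auto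
  qed
  finally show ?thesis by simp
qed

lemma tanh_abs_le: "\<bar>tanh y\<bar> \<le> \<bar>y::real\<bar>"
proof -
  have pos: "tanh y \<le> y" if "0 \<le> y" for y :: real
  proof -
    have "(\<lambda>y. y - tanh y) 0 \<le> (\<lambda>y. y - tanh y) y"
    proof (rule DERIV_nonneg_imp_nondecreasing[OF that])
      fix x :: real assume "0 \<le> x" "x \<le> y"
      have "((\<lambda>y. y - tanh y) has_real_derivative 1 - (1 - (tanh x)^2) * 1) (at x)"
        by (intro DERIV_diff DERIV_ident has_field_derivative_tanh) simp_all
      then show "\<exists>d. ((\<lambda>y. y - tanh y) has_real_derivative d) (at x) \<and> 0 \<le> d" by force
    qed
    then show ?thesis by simp
  qed
  show ?thesis
  proof (cases "y \<ge> 0")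
    case True then show ?thesis using pos[OF True] by simp
  next
    case False
    then have "tanh (-y) \<le> -y" by (intro pos) auto
    with False show ?thesis by simp
  qed
qed


lemma gf_int: assumes th: "0 \<le> \<theta>" "\<theta> \<le> 1" and u: "norm u < 1"
  shows "integrable (PP \<theta>) (gf \<mu> u :: ('m::finite option \<Rightarrow> real) \<Rightarrow> real^'m)"
proof (rule Bochner_Integration.integrable_bound[where f="\<lambda>x. (1 + 1 / sf u) * l1 x"])
  show "integrable (PP \<theta>) (\<lambda>x::'m option \<Rightarrow> real. (1 + 1 / sf u) * l1 x)"
    by (intro Bochner_Integration.integrable_mult_right l1_int(1)[OF th])
  show "gf \<mu> u \<in> borel_measurable (PP \<theta>)" using meas_gf[of \<mu> u \<theta>] by simp
  show "AE x in PP \<theta>. norm (gf \<mu> u x) \<le> norm ((1 + 1 / sf u) * l1 x)"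
  proof (rule AE_I2)
    fix x :: "'m option \<Rightarrow> real"
    have sp: "0 < sf u" by (rule sf_pos[OF u])
    have "norm (gf \<mu> u x) \<le> (1 + 1 / sf u) * l1 x" using u sp by (intro gf_le) auto
    also have "\<dots> \<le> norm ((1 + 1 / sf u) * l1 x)" by simp
    finally show "norm (gf \<mu> u x) \<le> norm ((1 + 1 / sf u) * l1 x)" .
  qed
qed

lemma phi_int: assumes th: "0 \<le> \<theta>" "\<theta> \<le> 1" and u: "norm u \<le> 1" and mu: "0 < \<mu>"
  shows "integrable (PP \<theta>) (\<lambda>x::'m::finite option \<Rightarrow> real. h_mu \<mu> (zf u x))"
proof (rule Bochner_Integration.integrable_bound[where f="\<lambda>x. 2 * l1 x"])
  show "integrable (PP \<theta>) (\<lambda>x::'m option \<Rightarrow> real. 2 * l1 x)"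
    by (intro Bochner_Integration.integrable_mult_right l1_int(1)[OF th])
  show "(\<lambda>x::'m option \<Rightarrow> real. h_mu \<mu> (zf u x)) \<in> borel_measurable (PP \<theta>)" by (rule meas_phi1)
  show "AE x in PP \<theta>. norm (h_mu \<mu> (zf u x)) \<le> norm (2 * l1 x)"
  proof (rule AE_I2)
    fix x :: "'m option \<Rightarrow> real"
    have "norm (h_mu \<mu> (zf u x)) \<le> \<bar>zf u x\<bar>" using hmu_abs_le[OF mu] by simp
    also have "\<dots> \<le> 2 * l1 x" by (rule zf_le[OF u])
    also have "\<dots> \<le> norm (2 * l1 x)" by simp
    finally show "norm (h_mu \<mu> (zf u x)) \<le> norm (2 * l1 x)" .
  qed
qed

lemma obj_deriv: assumes th: "0 \<le> \<theta>" "\<theta> \<le> 1" and u0: "norm u0 < 1" and mu: "0 < \<mu>"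
  shows "(obj \<theta> \<mu> has_derivative (\<lambda>v. (\<integral>x. gf \<mu> u0 x \<partial>(PP \<theta> :: ('m::finite option \<Rightarrow> real) measure)) \<bullet> v)) (at u0)"
proof -
  define \<rho> where "\<rho> = (1 + norm u0) / 2"
  define r where "r = (1 - norm u0) / 2"
  define c where "c = sqrt (1 - \<rho>^2)"
  have r: "0 < r" using u0 by (simp add: r_def)
  have \<rho>: "0 \<le> \<rho>" "\<rho> < 1" using u0 by (auto simp: \<rho>_def)
  have c: "0 < c" unfolding c_def using \<rho> by (simp add: abs_square_less_1)
  have inball: "norm u < \<rho>" if "u \<in> ball u0 r" for u :: "real^'m"
  proof -
    have a: "norm u \<le> norm u0 + norm (u - u0)" by (metis add.commute diff_add_cancel norm_triangle_ineq)
    have b: "norm (u - u0) < r" using that by (simp add: dist_norm norm_minus_commute)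
    from a b have "norm u < norm u0 + r" by linarith
    then show ?thesis unfolding r_def \<rho>_def by (simp add: field_simps)
  qed
  have sfc: "c \<le> sf u" if "u \<in> ball u0 r" for u :: "real^'m"
  proof -
    have "(norm u)^2 \<le> \<rho>^2" using inball[OF that] by (intro power_mono) auto
    then show ?thesis unfolding c_def sf_def by simp
  qed
  define B where "B = (\<lambda>x::'m option \<Rightarrow> real. (1 + 1 / c) * l1 x)"
  have "((\<lambda>u. \<integral>x. h_mu \<mu> (zf u x) \<partial>PP \<theta>) has_derivative (\<lambda>v. \<integral>x. gf \<mu> u0 x \<bullet> v \<partial>PP \<theta>)) (at u0)"
  proof (rule diff_under_integral(1)[where r=r and B=B])
    show "0 < r" by (rule r)
    fix u and x :: "'m option \<Rightarrow> real" assume u: "u \<in> ball u0 r"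
    have nu: "norm u < 1" using inball[OF u] \<rho> by simp
    show "((\<lambda>u. h_mu \<mu> (zf u x)) has_derivative (\<lambda>v. gf \<mu> u x \<bullet> v)) (at u)"
      using phi1_deriv[OF nu] mu by simp
    have sp: "0 < sf u" using sfc[OF u] c by simp
    have "onorm (\<lambda>v. gf \<mu> u x \<bullet> v) \<le> (1 + 1 / sf u) * l1 x" using nu sp by (intro onorm_gf) auto
    also have "\<dots> \<le> (1 + 1 / c) * l1 x"
      using sfc[OF u] c l1_nonneg[of x] by (intro mult_right_mono add_left_mono divide_left_mono) auto
    finally show "onorm (\<lambda>v. gf \<mu> u x \<bullet> v) \<le> B x" by (simp add: B_def)
  next
    show "integrable (PP \<theta>) B" unfolding B_def by (intro Bochner_Integration.integrable_mult_right l1_int(1)[OF th])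
  next
    fix u show "(\<lambda>x. h_mu \<mu> (zf u x)) \<in> borel_measurable (PP \<theta>)" by (rule meas_phi1)
  next
    fix v show "(\<lambda>x. gf \<mu> u0 x \<bullet> v) \<in> borel_measurable (PP \<theta>)" by (rule meas_gfv)
  next
    show "integrable (PP \<theta>) (\<lambda>x. h_mu \<mu> (zf u0 x))" using u0 mu by (intro phi_int[OF th]) auto
  qed
  moreover have "(\<lambda>v. \<integral>x. gf \<mu> u0 x \<bullet> v \<partial>PP \<theta>) = (\<lambda>v. (\<integral>x. gf \<mu> u0 x \<partial>PP \<theta>) \<bullet> v)"
    using gf_int[OF th u0] by (intro ext integral_inner_left) auto
  ultimately show ?thesis unfolding obj_eq by simp
qed


lemma G_deriv: assumes th: "0 \<le> \<theta>" "\<theta> \<le> 1" and w: "norm w \<le> 1/4" and mu: "0 < \<mu>"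
  shows "((\<lambda>u. \<integral>x. gf \<mu> u x \<partial>(PP \<theta> :: ('m::finite option \<Rightarrow> real) measure)) has_derivative (\<lambda>v. \<integral>x. D2 \<mu> w x v \<partial>PP \<theta>)) (at w)"
    and "\<And>v. integrable (PP \<theta> :: ('m::finite option \<Rightarrow> real) measure) (\<lambda>x. D2 \<mu> w x v)"
proof -
  define B where "B = (\<lambda>x::'m option \<Rightarrow> real. 9 / \<mu> * (l1 x)^2 + 4 * l1 x)"
  have inb: "norm u \<le> 1/2" if "u \<in> ball w (1/4)" for u :: "real^'m"
  proof -
    have a: "norm u \<le> norm w + norm (u - w)" by (metis add.commute diff_add_cancel norm_triangle_ineq)
    have b: "norm (u - w) < 1/4" using that by (simp add: dist_norm norm_minus_commute)
    from a b w show ?thesis by linarith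
  qed
  have sfb: "1/2 \<le> sf u" if "norm u \<le> 1/2" for u :: "real^'m"
  proof -
    have "(norm u)^2 \<le> (1/2)^2" using that by (intro power_mono) auto
    then have "1/4 \<le> 1 - (norm u)^2" by (simp add: power_divide)
    then have "sqrt (1/4) \<le> sf u" unfolding sf_def by (rule real_sqrt_le_mono)
    moreover have "sqrt (1/4::real) = 1/2" by (simp add: real_sqrt_divide)
    ultimately show ?thesis by simp
  qed
  have Bint: "integrable (PP \<theta>) B" unfolding B_def
    by (intro Bochner_Integration.integrable_add Bochner_Integration.integrable_mult_right l1_int[OF th])
  have w1: "w \<in> ball w (1/4)" by simp
  have nw: "norm w < 1" using w by simp
  note D = diff_under_integral[where \<phi>="\<lambda>u x. gf \<mu> u x" and D="D2 \<mu>" and r="1/4" and B=B and M="PP \<theta>"]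
  have hyps: "0 < (1/4::real)"
      "\<And>u x. u \<in> ball w (1/4) \<Longrightarrow> x \<in> space (PP \<theta>) \<Longrightarrow> ((\<lambda>u. gf \<mu> u x) has_derivative D2 \<mu> u x) (at u)"
      "\<And>u x. u \<in> ball w (1/4) \<Longrightarrow> x \<in> space (PP \<theta>) \<Longrightarrow> onorm (D2 \<mu> u x) \<le> B x"
      "\<And>u. u \<in> ball w (1/4) \<Longrightarrow> (\<lambda>x. gf \<mu> u x) \<in> borel_measurable (PP \<theta>)"
      "\<And>v. (\<lambda>x. D2 \<mu> w x v) \<in> borel_measurable (PP \<theta>)"
      "integrable (PP \<theta>) (gf \<mu> w)"
  proof -
    show "0 < (1/4::real)" by simp
    fix u x assume u: "u \<in> ball w (1/4)"
    have nu: "norm u < 1" using inb[OF u] by simp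
    show "((\<lambda>u. gf \<mu> u x) has_derivative D2 \<mu> u x) (at u)" using gf_deriv[OF nu] mu by simp
    show "onorm (D2 \<mu> u x) \<le> B x"
    proof (rule onorm_le)
      fix v show "norm (D2 \<mu> u x v) \<le> B x * norm v"
        unfolding B_def using D2_le[OF inb[OF u] sfb[OF inb[OF u]] mu] by simp
    qed
  next
    fix u show "(\<lambda>x. gf \<mu> u x) \<in> borel_measurable (PP \<theta>)" by (rule meas_gf)
  next
    fix v show "(\<lambda>x. D2 \<mu> w x v) \<in> borel_measurable (PP \<theta>)" by (rule meas_D2)
  next
    show "integrable (PP \<theta>) (gf \<mu> w)" by (rule gf_int[OF th nw])
  qed
  show "((\<lambda>u. \<integral>x. gf \<mu> u x \<partial>(PP \<theta> :: ('m::finite option \<Rightarrow> real) measure)) has_derivative (\<lambda>v. \<integral>x. D2 \<mu> w x v \<partial>PP \<theta>)) (at w)"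
    by (rule D(1)[OF hyps(1,2,3) Bint hyps(4,5,6)])
  show "\<And>v. integrable (PP \<theta> :: ('m::finite option \<Rightarrow> real) measure) (\<lambda>x. D2 \<mu> w x v)"
    by (rule D(2)[OF hyps(1,2,3) Bint hyps(4,5,6)])
qed


lemma vD2: "v \<bullet> D2 \<mu> w x v = (1 - (tanh (zf w x / \<mu>))^2) * (af w x \<bullet> v)^2 / \<mu>
   - tanh (zf w x / \<mu>) * x None * (v \<bullet> v) / sf w - tanh (zf w x / \<mu>) * x None * (w \<bullet> v)^2 / sf w ^ 3"
  by (simp add: D2_def inner_add_right inner_diff_right inner_commute power2_eq_square algebra_simps)

lemma pw_bound:
  assumes mu: "0 < \<mu>" and s: "1/2 \<le> sf w" and ww: "w \<bullet> w \<le> 1/16"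
  shows "(1/\<mu>) * (indicator {0} (x None) * (v \<bullet> xb x)^2 - indicator {0} (x None) * ((w \<bullet> xb x)^2 * (v \<bullet> xb x)^2) / \<mu>^2)
     - 3 * \<bar>x None\<bar> * (v \<bullet> v) \<le> v \<bullet> D2 \<mu> w x v"
proof (cases "x None = 0")
  case True
  define t where "t = tanh (w \<bullet> xb x / \<mu>)"
  have z: "zf w x = w \<bullet> xb x" using True by (simp add: zf_def)
  have a: "af w x = xb x" using True by (simp add: af_def)
  have "t^2 \<le> (w \<bullet> xb x / \<mu>)^2"
    unfolding t_def using tanh_abs_le[of "w \<bullet> xb x / \<mu>"] by (metis abs_ge_zero power2_abs power_mono)
  then have "(1 - (w \<bullet> xb x / \<mu>)^2) * (xb x \<bullet> v)^2 \<le> (1 - t^2) * (xb x \<bullet> v)^2"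
    by (intro mult_right_mono) auto
  then have ineq: "(1 - (w \<bullet> xb x / \<mu>)^2) * (xb x \<bullet> v)^2 / \<mu> \<le> (1 - t^2) * (xb x \<bullet> v)^2 / \<mu>"
    using mu by (intro divide_right_mono) auto
  have eq: "(1/\<mu>) * ((v \<bullet> xb x)^2 - ((w \<bullet> xb x)^2 * (v \<bullet> xb x)^2) / \<mu>^2) = (1 - (w \<bullet> xb x / \<mu>)^2) * (xb x \<bullet> v)^2 / \<mu>"
    using mu by (simp add: field_simps inner_commute power2_eq_square)
  have e: "(1/\<mu>) * (indicator {0} (x None) * (v \<bullet> xb x)^2 - indicator {0} (x None) * ((w \<bullet> xb x)^2 * (v \<bullet> xb x)^2) / \<mu>^2)
     - 3 * \<bar>x None\<bar> * (v \<bullet> v) = (1/\<mu>) * ((v \<bullet> xb x)^2 - ((w \<bullet> xb x)^2 * (v \<bullet> xb x)^2) / \<mu>^2)"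
    using True by simp
  have f: "(1 - t^2) * (xb x \<bullet> v)^2 / \<mu> = v \<bullet> D2 \<mu> w x v"
    using True by (simp add: vD2 z a t_def)
  show ?thesis unfolding e eq f[symmetric] by (rule ineq)
next
  case False
  define t where "t = tanh (zf w x / \<mu>)"
  have t: "\<bar>t\<bar> \<le> 1" using tanh_real_bounds[of "zf w x / \<mu>"] unfolding t_def by auto
  have "t^2 = \<bar>t\<bar>^2" by simp
  also have "\<dots> \<le> 1" using t by (intro power_le_one) auto
  finally have t2: "0 \<le> 1 - t^2" by simp
  have sp: "0 < sf w" using s by simp
  have i1: "1 / sf w \<le> 2" using s sp by (simp add: divide_le_eq)
  have i3: "1 / sf w ^ 3 \<le> 8"
  proof -
    have "(1/2::real)^3 \<le> sf w ^ 3" using s by (intro power_mono) auto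
    moreover have "(1/2::real)^3 = 1/8" by (simp add: power_divide)
    ultimately have h: "1 \<le> 8 * sf w ^ 3" by linarith
    then show ?thesis using sp by (simp add: divide_le_eq)
  qed
  have cs: "(w \<bullet> v)^2 \<le> (w \<bullet> w) * (v \<bullet> v)"
  proof -
    have "\<bar>w \<bullet> v\<bar> \<le> norm w * norm v" by (rule Cauchy_Schwarz_ineq2)
    then have "\<bar>w \<bullet> v\<bar>^2 \<le> (norm w * norm v)^2" by (rule power_mono) simp
    then show ?thesis by (simp add: power_mult_distrib power2_norm_eq_inner)
  qed
  have vv: "0 \<le> v \<bullet> v" by simp
  have f1: "0 \<le> (1 - t^2) * (af w x \<bullet> v)^2 / \<mu>" using t2 mu by simp
  have f2: "\<bar>t * x None * (v \<bullet> v) / sf w\<bar> \<le> \<bar>x None\<bar> * 2 * (v \<bullet> v)"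
  proof -
    have "\<bar>t * x None * (v \<bullet> v) / sf w\<bar> = \<bar>t\<bar> * \<bar>x None\<bar> * (v \<bullet> v) * (1 / sf w)"
      using sp by (simp add: abs_mult)
    also have "\<dots> \<le> 1 * \<bar>x None\<bar> * (v \<bullet> v) * 2"
      using t i1 sp by (intro mult_mono mult_right_mono) auto
    finally show ?thesis by simp
  qed
  have f3: "\<bar>t * x None * (w \<bullet> v)^2 / sf w ^ 3\<bar> \<le> \<bar>x None\<bar> * (1/2) * (v \<bullet> v)"
  proof -
    have "\<bar>t * x None * (w \<bullet> v)^2 / sf w ^ 3\<bar> = \<bar>t\<bar> * \<bar>x None\<bar> * (w \<bullet> v)^2 * (1 / sf w ^ 3)"
      using sp by (simp add: abs_mult)
    also have "\<dots> \<le> 1 * \<bar>x None\<bar> * ((1/16) * (v \<bullet> v)) * 8"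
    proof (intro mult_mono mult_right_mono)
      have "(w \<bullet> w) * (v \<bullet> v) \<le> 1/16 * (v \<bullet> v)" using ww vv by (rule mult_right_mono)
      then show "(w \<bullet> v)^2 \<le> 1/16 * (v \<bullet> v)" using cs by linarith
    qed (use t i3 sp vv in auto)
    finally show ?thesis by simp
  qed
  have "- 3 * \<bar>x None\<bar> * (v \<bullet> v) \<le> (1 - t^2) * (af w x \<bullet> v)^2 / \<mu> - t * x None * (v \<bullet> v) / sf w - t * x None * (w \<bullet> v)^2 / sf w ^ 3"
  proof -
    have g2: "t * x None * (v \<bullet> v) / sf w \<le> \<bar>x None\<bar> * 2 * (v \<bullet> v)" using f2 by (rule abs_le_D1)
    have g3: "t * x None * (w \<bullet> v)^2 / sf w ^ 3 \<le> \<bar>x None\<bar> * (1/2) * (v \<bullet> v)" using f3 by (rule abs_le_D1)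
    have g4: "0 \<le> \<bar>x None\<bar> * (v \<bullet> v)" using vv by simp
    from f1 g2 g3 g4 show ?thesis by linarith
  qed
  then show ?thesis using False by (simp add: vD2 t_def)
qed

lemma E_abs: assumes th: "0 \<le> \<theta>" "\<theta> \<le> 1"
  shows "integrable (PP \<theta>) (\<lambda>x::'m::finite option \<Rightarrow> real. \<bar>x None\<bar>)"
    and "(\<integral>x. \<bar>x None\<bar> \<partial>(PP \<theta> :: ('m::finite option \<Rightarrow> real) measure)) \<le> \<theta>"
proof -
  define f :: "'m option \<Rightarrow> real \<Rightarrow> real" where "f = (\<lambda>i. if i = None then abs else (\<lambda>_. 1))"
  interpret B: prob_space "BG \<theta>" by (rule prob_BG[OF th])
  have fi: "integrable (BG \<theta>) (f i)" for i
    using BG_int_abspow[OF th, of 1] by (auto simp: f_def)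
  have eq: "(\<lambda>x::'m option \<Rightarrow> real. \<bar>x None\<bar>) = (\<lambda>x. \<Prod>i\<in>UNIV. f i (x i))"
    by (rule ext) (simp add: prod_option f_def)
  show "integrable (PP \<theta>) (\<lambda>x::'m::finite option \<Rightarrow> real. \<bar>x None\<bar>)"
    unfolding eq by (rule PP_prod(1)[OF th fi])
  have "(\<integral>x. \<bar>x None\<bar> \<partial>(PP \<theta> :: ('m::finite option \<Rightarrow> real) measure)) = integral\<^sup>L (BG \<theta>) abs"
    unfolding eq PP_prod(2)[OF th fi] using B.prob_space by (simp add: prod_option f_def)
  then show "(\<integral>x. \<bar>x None\<bar> \<partial>(PP \<theta> :: ('m::finite option \<Rightarrow> real) measure)) \<le> \<theta>"
    using BG_abs[OF th] by simp
qed

lemma hess_lower: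
  fixes w v :: "real^'m::finite"
  assumes th: "0 \<le> \<theta>" "\<theta> \<le> 1" and mu: "0 < \<mu>" and s: "1/2 \<le> sf w" and ww: "w \<bullet> w \<le> 1/16"
    and intD: "integrable (PP \<theta>) (\<lambda>x::'m option \<Rightarrow> real. D2 \<mu> w x v)"
  shows "(1/\<mu>) * ((1-\<theta>) * \<theta> * (v \<bullet> v) - 3 * (1-\<theta>) * \<theta> * ((w \<bullet> w) * (v \<bullet> v)) / \<mu>^2) - 3 * \<theta> * (v \<bullet> v)
     \<le> v \<bullet> (\<integral>x. D2 \<mu> w x v \<partial>(PP \<theta> :: ('m option \<Rightarrow> real) measure))"
proof -
  let ?P = "PP \<theta> :: ('m option \<Rightarrow> real) measure"
  define Q where "Q = (\<lambda>x::'m option \<Rightarrow> real. indicator {0} (x None) * (v \<bullet> xb x)^2)"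
  define R where "R = (\<lambda>x::'m option \<Rightarrow> real. indicator {0} (x None) * ((w \<bullet> xb x)^2 * (v \<bullet> xb x)^2))"
  define L where "L = (\<lambda>x::'m option \<Rightarrow> real. (1/\<mu>) * (Q x - R x / \<mu>^2) - 3 * \<bar>x None\<bar> * (v \<bullet> v))"
  have Qi: "integrable ?P Q" unfolding Q_def by (rule E_quad(1)[OF th])
  have Ri: "integrable ?P R" unfolding R_def by (rule E_quart(1)[OF th])
  have Ai: "integrable ?P (\<lambda>x. \<bar>x None\<bar>)" by (rule E_abs(1)[OF th])
  have Li: "integrable ?P L" unfolding L_def using Qi Ri Ai by auto
  have "integral\<^sup>L ?P L = (1/\<mu>) * (integral\<^sup>L ?P Q - integral\<^sup>L ?P R / \<mu>^2) - 3 * (v \<bullet> v) * (\<integral>x. \<bar>x None\<bar> \<partial>?P)"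
    unfolding L_def using Qi Ri Ai by (simp add: mult_ac)
  also have "\<dots> \<ge> (1/\<mu>) * ((1-\<theta>) * \<theta> * (v \<bullet> v) - 3 * (1-\<theta>) * \<theta> * ((w \<bullet> w) * (v \<bullet> v)) / \<mu>^2) - 3 * \<theta> * (v \<bullet> v)"
  proof -
    have q: "integral\<^sup>L ?P Q = (1-\<theta>) * \<theta> * (v \<bullet> v)" unfolding Q_def by (rule E_quad(2)[OF th])
    have r: "integral\<^sup>L ?P R \<le> 3 * (1-\<theta>) * \<theta> * ((w \<bullet> w) * (v \<bullet> v))" unfolding R_def by (rule E_quart_le[OF th])
    have a: "(\<integral>x. \<bar>x None\<bar> \<partial>?P) \<le> \<theta>" by (rule E_abs(2)[OF th])
    have "integral\<^sup>L ?P R / \<mu>^2 \<le> 3 * (1-\<theta>) * \<theta> * ((w \<bullet> w) * (v \<bullet> v)) / \<mu>^2"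
      using r mu by (intro divide_right_mono) auto
    then have 1: "(1/\<mu>) * ((1-\<theta>) * \<theta> * (v \<bullet> v) - 3 * (1-\<theta>) * \<theta> * ((w \<bullet> w) * (v \<bullet> v)) / \<mu>^2)
        \<le> (1/\<mu>) * (integral\<^sup>L ?P Q - integral\<^sup>L ?P R / \<mu>^2)"
      using mu unfolding q by (intro mult_left_mono) auto
    have 2: "3 * (v \<bullet> v) * (\<integral>x. \<bar>x None\<bar> \<partial>?P) \<le> 3 * (v \<bullet> v) * \<theta>"
      using a by (intro mult_left_mono) auto
    from 1 2 show ?thesis by (simp add: mult_ac)
  qed
  also have "integral\<^sup>L ?P L \<le> (\<integral>x. v \<bullet> D2 \<mu> w x v \<partial>?P)"
  proof (rule Bochner_Integration.integral_mono[OF Li])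
    show "integrable ?P (\<lambda>x. v \<bullet> D2 \<mu> w x v)" using intD by auto
    fix x :: "'m option \<Rightarrow> real"
    show "L x \<le> v \<bullet> D2 \<mu> w x v" unfolding L_def Q_def R_def
      using pw_bound[OF mu s ww, of x v] by simp
  qed
  also have "(\<integral>x. v \<bullet> D2 \<mu> w x v \<partial>?P) = v \<bullet> (\<integral>x. D2 \<mu> w x v \<partial>?P)"
    using intD by (intro integral_inner_right) auto
  finally show ?thesis .
qed

theorem mainTheorem7:
  fixes \<theta> \<mu> :: real and w :: "real^'m::finite"
  assumes "0 < \<theta>" and "\<theta> < 1/2"
    and "0 < \<mu>" and "\<mu> \<le> 1 / (20 * sqrt (real (CARD('m) + 1)))"
    and "norm w \<le> \<mu> / (4 * sqrt 2)"
  shows "\<exists>H. has_hessian_at (obj \<theta> \<mu>) H w \<and>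
           (\<forall>v. v \<bullet> H v \<ge> \<theta> / (5 * sqrt (2 * pi) * \<mu>) * (v \<bullet> v))"
proof -
  have th: "0 \<le> \<theta>" "\<theta> \<le> 1" using assms by auto
  have mu: "0 < \<mu>" by (rule assms(3))
  have s2: "7/5 \<le> sqrt (2::real)" by (rule real_le_rsqrt) (simp add: power_divide)
  have "sqrt 2 \<le> sqrt (real (CARD('m) + 1))"
    using finite_UNIV_card_ge_0[where 'a='m] by simp
  then have "7/5 \<le> sqrt (real (CARD('m) + 1))" using s2 by linarith
  then have c28: "28 \<le> 20 * sqrt (real (CARD('m) + 1))" by linarith
  have f: "1 / (20 * sqrt (real (CARD('m) + 1))) \<le> 1 / 28"
    by (rule divide_left_mono[OF c28]) (use c28 in auto)
  have mu28: "\<mu> \<le> 1/28" using assms(4) f by linarith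
  have "\<mu> / (4 * sqrt 2) \<le> \<mu> / (4 * (7/5))" using s2 mu by (intro divide_left_mono) auto
  then have nw: "norm w \<le> \<mu> * (5/28)" using assms(5) by simp
  then have nw4: "norm w \<le> 1/4" using mu28 mu by linarith
  have ww32: "w \<bullet> w \<le> \<mu>^2 / 32"
  proof -
    have "(norm w)^2 \<le> (\<mu> / (4 * sqrt 2))^2" using assms(5) by (intro power_mono) auto
    also have "\<dots> = \<mu>^2 / 32" by (simp add: power_divide power_mult_distrib)
    finally show ?thesis by (simp add: power2_norm_eq_inner)
  qed
  have ww16: "w \<bullet> w \<le> 1/16"
  proof -
    have "(norm w)^2 \<le> (1/4)^2" using nw4 by (intro power_mono) auto
    then show ?thesis by (simp add: power2_norm_eq_inner power_divide)
  qed
  have sfw: "1/2 \<le> sf w"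
  proof -
    have "(norm w)^2 \<le> (1/2)^2" using nw4 by (intro power_mono) auto
    then have "1/4 \<le> 1 - (norm w)^2" by (simp add: power_divide)
    then have "sqrt (1/4) \<le> sf w" unfolding sf_def by (rule real_sqrt_le_mono)
    moreover have "sqrt (1/4::real) = 1/2" by (simp add: real_sqrt_divide)
    ultimately show ?thesis by simp
  qed
  define G where "G = (\<lambda>u. \<integral>x. gf \<mu> u x \<partial>(PP \<theta> :: ('m option \<Rightarrow> real) measure))"
  define H where "H = (\<lambda>v. \<integral>x. D2 \<mu> w x v \<partial>(PP \<theta> :: ('m option \<Rightarrow> real) measure))"
  have hess: "has_hessian_at (obj \<theta> \<mu>) H w"
    unfolding has_hessian_at_def
  proof (intro exI conjI allI impI)
    fix u :: "real^'m" assume "norm u < 1"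
    then show "(obj \<theta> \<mu> has_derivative (\<lambda>v. G u \<bullet> v)) (at u)"
      unfolding G_def by (rule obj_deriv[OF th _ mu])
  next
    show "(G has_derivative H) (at w)" unfolding G_def H_def by (rule G_deriv(1)[OF th nw4 mu])
  qed
  have bound: "\<theta> / (5 * sqrt (2 * pi) * \<mu>) * (v \<bullet> v) \<le> v \<bullet> H v" for v
  proof -
    have LB: "(1/\<mu>) * ((1-\<theta>) * \<theta> * (v \<bullet> v) - 3 * (1-\<theta>) * \<theta> * ((w \<bullet> w) * (v \<bullet> v)) / \<mu>^2) - 3 * \<theta> * (v \<bullet> v) \<le> v \<bullet> H v"
      unfolding H_def by (rule hess_lower[OF th mu sfw ww16 G_deriv(2)[OF th nw4 mu]])
    define K where "K = \<theta> * (v \<bullet> v)"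
    have K: "0 \<le> K" unfolding K_def using th by simp
    have sp: "12/5 \<le> sqrt (2 * pi)" by (rule real_le_rsqrt) (use pi_gt3 in \<open>simp add: power_divide\<close>)
    have c2: "\<theta> / (5 * sqrt (2 * pi) * \<mu>) * (v \<bullet> v) \<le> K / (12 * \<mu>)"
    proof -
      have "12 * \<mu> \<le> 5 * sqrt (2 * pi) * \<mu>" using sp mu by (intro mult_right_mono) auto
      then have "K / (5 * sqrt (2 * pi) * \<mu>) \<le> K / (12 * \<mu>)" using K mu by (intro divide_left_mono) auto
      then show ?thesis unfolding K_def by simp
    qed
    have c3: "(w \<bullet> w) / \<mu>^2 \<le> 1/32" using ww32 mu by (simp add: divide_le_eq)
    have c4: "(1-\<theta>) * K * (29/32) \<le> (1-\<theta>) * \<theta> * (v \<bullet> v) - 3 * (1-\<theta>) * \<theta> * ((w \<bullet> w) * (v \<bullet> v)) / \<mu>^2"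
    proof -
      have e: "3 * (1-\<theta>) * \<theta> * ((w \<bullet> w) * (v \<bullet> v)) / \<mu>^2 = 3 * ((1-\<theta>) * K) * ((w \<bullet> w) / \<mu>^2)"
        unfolding K_def by simp
      have "3 * ((1-\<theta>) * K) * ((w \<bullet> w) / \<mu>^2) \<le> 3 * ((1-\<theta>) * K) * (1/32)"
        using c3 K th by (intro mult_left_mono) auto
      then show ?thesis unfolding e K_def by (simp add: mult_ac)
    qed
    have c5: "K * (29/64) \<le> (1-\<theta>) * K * (29/32)"
    proof -
      have "K * (1/2) \<le> K * (1-\<theta>)" using K assms(2) by (intro mult_left_mono) auto
      then show ?thesis by simp
    qed
    have c6: "(1/\<mu>) * (K * (29/64)) \<le> (1/\<mu>) * ((1-\<theta>) * \<theta> * (v \<bullet> v) - 3 * (1-\<theta>) * \<theta> * ((w \<bullet> w) * (v \<bullet> v)) / \<mu>^2)"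
    proof -
      have "K * (29/64) \<le> (1-\<theta>) * \<theta> * (v \<bullet> v) - 3 * (1-\<theta>) * \<theta> * ((w \<bullet> w) * (v \<bullet> v)) / \<mu>^2"
        using c4 c5 by linarith
      then show ?thesis using mu by (intro mult_left_mono) auto
    qed
    have c7: "K / (12 * \<mu>) \<le> (1/\<mu>) * (K * (29/64)) - 3 * K"
    proof -
      have "3 * \<mu> \<le> 71/192" using mu28 by simp
      then have "3 * \<mu> * K \<le> 71/192 * K" using K by (intro mult_right_mono) auto
      then have h: "3 * K * \<mu> \<le> 71/192 * K" by (simp add: mult_ac)
      then have "K / 12 \<le> K * (29/64) - 3 * K * \<mu>" by linarith
      then have "K / 12 / \<mu> \<le> (K * (29/64) - 3 * K * \<mu>) / \<mu>" using mu by (intro divide_right_mono) auto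
      then show ?thesis using mu by (simp add: field_simps)
    qed
    have "\<theta> / (5 * sqrt (2 * pi) * \<mu>) * (v \<bullet> v) \<le> (1/\<mu>) * ((1-\<theta>) * \<theta> * (v \<bullet> v) - 3 * (1-\<theta>) * \<theta> * ((w \<bullet> w) * (v \<bullet> v)) / \<mu>^2) - 3 * \<theta> * (v \<bullet> v)"
      using c2 c6 c7 unfolding K_def by linarith
    with LB show ?thesis by linarith
  qed
  show ?thesis using hess bound by blast
qed

end
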